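(* Let $0\le k\le n$. There are exactly $k(n-k)+1$ isomorphism classes of cuspidal matroids of rank $k$ on $n$ elements, and the Tutte polynomials of representatives of these classes are linearly independent in $\mathbb{Z}[x,y]$.
   Context: $\mathsf{U}_{r,m}$ is the uniform matroid of rank $r$ on $m$ elements. A matroid is elementary split if it has no minor isomorphic to $\mathsf{U}_{0,1}\oplus\mathsf{U}_{1,2}\oplus\mathsf{U}_{1,1}$; it is Schubert (nested) if its lattice of cyclic flats is a chain; it is cuspidal if it is both Schubert and elementary split. Every cuspidal matroid of rank $k$ on $n$ elements is isomorphic to some $\mathsf{\Lambda}_{r,k,h,n}$ with $0\le r\le h$ and $0<k-r\le n-h$, the matroid on $[n]$ whose bases are the $k$-subsets $B$ with $|B\cap\{1,\dots,h\}|\ge r$. *)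

theory Defs
  imports Main "HOL-Computational_Algebra.Polynomial"
begin

definition matroid :: "'a set \<Rightarrow> 'a set set \<Rightarrow> bool" where
  "matroid E I \<longleftrightarrow> finite E \<and> (\<forall>X\<in>I. X \<subseteq> E) \<and> {} \<in> I
     \<and> (\<forall>X Y. X \<in> I \<longrightarrow> Y \<subseteq> X \<longrightarrow> Y \<in> I)
     \<and> (\<forall>X\<in>I. \<forall>Y\<in>I. card X < card Y \<longrightarrow> (\<exists>e\<in>Y - X. insert e X \<in> I))"

definition mrank :: "'a set set \<Rightarrow> 'a set \<Rightarrow> nat" where
  "mrank I A = Max (card ` {X. X \<in> I \<and> X \<subseteq> A})"

definition circuit :: "'a set \<Rightarrow> 'a set set \<Rightarrow> 'a set \<Rightarrow> bool" where
  "circuit E I C \<longleftrightarrow> C \<subseteq> E \<and> C \<notin> I \<and> (\<forall>D. D \<subset> C \<longrightarrow> D \<in> I)"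

definition flat :: "'a set \<Rightarrow> 'a set set \<Rightarrow> 'a set \<Rightarrow> bool" where
  "flat E I F \<longleftrightarrow> F \<subseteq> E \<and> (\<forall>e\<in>E - F. mrank I (insert e F) > mrank I F)"

definition cyclic :: "'a set \<Rightarrow> 'a set set \<Rightarrow> 'a set \<Rightarrow> bool" where
  "cyclic E I F \<longleftrightarrow> F = \<Union>{C. circuit E I C \<and> C \<subseteq> F}"

definition cyclic_flat :: "'a set \<Rightarrow> 'a set set \<Rightarrow> 'a set \<Rightarrow> bool" where
  "cyclic_flat E I F \<longleftrightarrow> flat E I F \<and> cyclic E I F"

definition schubert :: "'a set \<Rightarrow> 'a set set \<Rightarrow> bool" where
  "schubert E I \<longleftrightarrow> (\<forall>F G. cyclic_flat E I F \<longrightarrow> cyclic_flat E I G \<longrightarrow> F \<subseteq> G \<or> G \<subseteq> F)"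

text \<open>The minor (M / C) \ D for disjoint C, D: ground set E - (C \<union> D).\<close>
definition minor_indep :: "'a set \<Rightarrow> 'a set set \<Rightarrow> 'a set \<Rightarrow> 'a set \<Rightarrow> 'a set set" where
  "minor_indep E I C D = {X. X \<subseteq> E - (C \<union> D) \<and> mrank I (X \<union> C) = card X + mrank I C}"

definition miso :: "'a set \<Rightarrow> 'a set set \<Rightarrow> 'b set \<Rightarrow> 'b set set \<Rightarrow> bool" where
  "miso E1 I1 E2 I2 \<longleftrightarrow> (\<exists>f. bij_betw f E1 E2 \<and> (\<forall>X. X \<subseteq> E1 \<longrightarrow> (X \<in> I1 \<longleftrightarrow> f ` X \<in> I2)))"

definition unif_ground :: "nat \<Rightarrow> nat set" where
  "unif_ground m = {0..<m}"

definition unif_indep :: "nat \<Rightarrow> nat \<Rightarrow> nat set set" where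
  "unif_indep r m = {X. X \<subseteq> {0..<m} \<and> card X \<le> r}"

definition dsum_ground :: "'a set \<Rightarrow> 'b set \<Rightarrow> ('a + 'b) set" where
  "dsum_ground E1 E2 = Inl ` E1 \<union> Inr ` E2"

definition dsum_indep :: "'a set set \<Rightarrow> 'b set set \<Rightarrow> ('a + 'b) set set" where
  "dsum_indep I1 I2 = {X. Inl -` X \<in> I1 \<and> Inr -` X \<in> I2}"

definition forb_ground :: "(nat + (nat + nat)) set" where
  "forb_ground = dsum_ground (unif_ground 1) (dsum_ground (unif_ground 2) (unif_ground 1))"

definition forb_indep :: "(nat + (nat + nat)) set set" where
  "forb_indep = dsum_indep (unif_indep 0 1) (dsum_indep (unif_indep 1 2) (unif_indep 1 1))"

definition elementary_split :: "'a set \<Rightarrow> 'a set set \<Rightarrow> bool" where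
  "elementary_split E I \<longleftrightarrow>
     \<not> (\<exists>C D. C \<subseteq> E \<and> D \<subseteq> E \<and> C \<inter> D = {} \<and>
           miso (E - (C \<union> D)) (minor_indep E I C D) forb_ground forb_indep)"

definition cuspidal :: "'a set \<Rightarrow> 'a set set \<Rightarrow> bool" where
  "cuspidal E I \<longleftrightarrow> schubert E I \<and> elementary_split E I"

definition cusp_set :: "nat \<Rightarrow> nat \<Rightarrow> nat set set set" where
  "cusp_set k n = {I. matroid {0..<n} I \<and> mrank I {0..<n} = k \<and> cuspidal {0..<n} I}"

definition iso_rel :: "nat \<Rightarrow> nat \<Rightarrow> (nat set set \<times> nat set set) set" where
  "iso_rel k n = {(I, J). I \<in> cusp_set k n \<and> J \<in> cusp_set k n \<and> miso {0..<n} I {0..<n} J}"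

section \<open>Tutte polynomial in Z[x,y], represented as int poly poly (inner variable x, outer y)\<close>

definition varX :: "int poly poly" where "varX = [:[:0, 1:]:]"
definition varY :: "int poly poly" where "varY = [:0, 1:]"

definition tutte :: "'a set \<Rightarrow> 'a set set \<Rightarrow> int poly poly" where
  "tutte E I = (\<Sum>A\<in>Pow E. (varX - 1) ^ (mrank I E - mrank I A) * (varY - 1) ^ (card A - mrank I A))"

end

theory Submission
  imports Defs "HOL-Computational_Algebra.Polynomial"
begin

locale mat =
  fixes E :: "'a set" and I :: "'a set set"
  assumes M: "matroid E I"
begin

abbreviation r where "r \<equiv> mrank I"

lemma finE: "finite E" using M unfolding matroid_def by blast
lemma indep_sub: "X \<in> I \<Longrightarrow> X \<subseteq> E" using M unfolding matroid_def by blast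
lemma empty_indep: "{} \<in> I" using M unfolding matroid_def by blast
lemma down: "X \<in> I \<Longrightarrow> Y \<subseteq> X \<Longrightarrow> Y \<in> I" using M unfolding matroid_def by blast
lemma aug: "X \<in> I \<Longrightarrow> Y \<in> I \<Longrightarrow> card X < card Y \<Longrightarrow> \<exists>e\<in>Y - X. insert e X \<in> I"
  using M unfolding matroid_def by blast
lemma indep_fin: "X \<in> I \<Longrightarrow> finite X" using indep_sub finE finite_subset by blast

lemma fin_set: "finite {X. X \<in> I \<and> X \<subseteq> A}"
proof -
  have "{X. X \<in> I \<and> X \<subseteq> A} \<subseteq> Pow E" using indep_sub by blast
  then show ?thesis using finE by (meson finite_Pow_iff finite_subset)
qed

lemma r_ge: "X \<in> I \<Longrightarrow> X \<subseteq> A \<Longrightarrow> card X \<le> r A"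
  unfolding mrank_def using fin_set by (intro Max_ge) auto

lemma r_obt: "\<exists>X. X \<in> I \<and> X \<subseteq> A \<and> card X = r A"
proof -
  have "r A \<in> card ` {X. X \<in> I \<and> X \<subseteq> A}"
    unfolding mrank_def using fin_set empty_indep by (intro Max_in) auto
  then show ?thesis by auto
qed

lemma r_le_card: "finite A \<Longrightarrow> r A \<le> card A"
  using r_obt card_mono by metis

lemma r_mono: "A \<subseteq> B \<Longrightarrow> r A \<le> r B"
  using r_obt r_ge by (metis order_trans)

lemma r_le_rE: "r A \<le> r E"
  using r_obt r_ge indep_sub by metis

lemma indep_r: "X \<in> I \<Longrightarrow> r X = card X"
  using r_ge r_le_card indep_fin by (meson dual_order.antisym order_refl)

lemma r_indep: assumes "A \<subseteq> E" "r A = card A" shows "A \<in> I"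
proof -
  obtain X where X: "X \<in> I" "X \<subseteq> A" "card X = r A" using r_obt by blast
  have "finite A" using assms finE finite_subset by blast
  then have "X = A" using X assms card_subset_eq by metis
  then show ?thesis using X by simp
qed

lemma indep_iff_r: "A \<subseteq> E \<Longrightarrow> A \<in> I \<longleftrightarrow> r A = card A"
  using indep_r r_indep by blast

lemma dep_r: "A \<subseteq> E \<Longrightarrow> A \<notin> I \<Longrightarrow> r A < card A"
  using indep_iff_r r_le_card finE finite_subset by (metis le_neq_implies_less)

lemma extend:
  assumes "X \<in> I" "X \<subseteq> A"
  shows "\<exists>Y. X \<subseteq> Y \<and> Y \<subseteq> A \<and> Y \<in> I \<and> card Y = r A"
proof -
  have "\<forall>X. X \<in> I \<and> X \<subseteq> A \<and> r A - card X = d \<longrightarrow> (\<exists>Y. X \<subseteq> Y \<and> Y \<subseteq> A \<and> Y \<in> I \<and> card Y = r A)" for d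
  proof (induction d)
    case 0
    then show ?case using r_ge by (metis order_refl le_antisym diff_is_0_eq)
  next
    case (Suc d)
    show ?case
    proof (intro allI impI)
      fix X assume H: "X \<in> I \<and> X \<subseteq> A \<and> r A - card X = Suc d"
      obtain Z where Z: "Z \<in> I" "Z \<subseteq> A" "card Z = r A" using r_obt by blast
      have "card X < card Z" using H Z by linarith
      then obtain e where e: "e \<in> Z - X" "insert e X \<in> I" using aug H Z by blast
      have "card (insert e X) = Suc (card X)" using e indep_fin H by auto
      then have "r A - card (insert e X) = d" using H by linarith
      moreover have "insert e X \<subseteq> A" using e H Z by blast
      ultimately obtain Y where "insert e X \<subseteq> Y \<and> Y \<subseteq> A \<and> Y \<in> I \<and> card Y = r A"
        using Suc.IH e by blast
      then show "\<exists>Y. X \<subseteq> Y \<and> Y \<subseteq> A \<and> Y \<in> I \<and> card Y = r A" by blast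
    qed
  qed
  then show ?thesis using assms by blast
qed

lemma submod:
  assumes "A \<subseteq> E" "B \<subseteq> E"
  shows "r (A \<union> B) + r (A \<inter> B) \<le> r A + r B"
proof -
  obtain J where J: "J \<in> I" "J \<subseteq> A \<inter> B" "card J = r (A \<inter> B)" using r_obt by blast
  obtain JA where JA: "J \<subseteq> JA" "JA \<subseteq> A" "JA \<in> I" "card JA = r A"
    using extend[of J A] J by blast
  obtain JU where JU: "JA \<subseteq> JU" "JU \<subseteq> A \<union> B" "JU \<in> I" "card JU = r (A \<union> B)"
    using extend[of JA "A \<union> B"] JA by blast
  have finU: "finite JU" using JU indep_fin by blast
  have "JU \<inter> A \<in> I" using down JU by blast
  then have "card (JU \<inter> A) \<le> card JA" using r_ge JA by (metis inf_le2)
  moreover have "JA \<subseteq> JU \<inter> A" using JA JU by blast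
  ultimately have eqA: "JU \<inter> A = JA" using finU by (metis card_seteq finite_Int)
  have "JA \<inter> B \<in> I" using down JA by blast
  then have "card (JA \<inter> B) \<le> card J" using r_ge J JA by (metis Int_mono order_refl)
  moreover have "J \<subseteq> JA \<inter> B" using J JA by blast
  moreover have "finite JA" using JA indep_fin by blast
  ultimately have eqB: "JA \<inter> B = J" by (metis card_seteq finite_Int)
  have sub: "J \<union> (JU - A) \<subseteq> JU \<inter> B" using J JA JU by blast
  have "card (J \<union> (JU - A)) = card J + card (JU - A)"
    using J finU indep_fin by (intro card_Un_disjoint) auto
  moreover have "card (JU - A) = card JU - card JA"
  proof -
    have "JU - A = JU - JA" using eqA by blast
    moreover have "finite JA" using JA indep_fin by blast
    ultimately show ?thesis using JA JU by (simp add: card_Diff_subset)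
  qed
  moreover have "card (J \<union> (JU - A)) \<le> card (JU \<inter> B)" using sub finU by (simp add: card_mono)
  moreover have "card (JU \<inter> B) \<le> r B" using r_ge down JU by (metis inf_le1 inf_le2)
  moreover have "card JA \<le> card JU" using JA JU finU card_mono by blast
  ultimately show ?thesis using J JA JU by linarith
qed

lemma r_insert_le: "r (insert x A) \<le> Suc (r A)"
proof -
  obtain X where X: "X \<in> I" "X \<subseteq> insert x A" "card X = r (insert x A)" using r_obt by blast
  have "X - {x} \<in> I" using down X by blast
  then have "card (X - {x}) \<le> r A" using r_ge X by blast
  moreover have "card X \<le> Suc (card (X - {x}))" using X indep_fin
    by (cases "x \<in> X") (auto simp: card_Diff_singleton_if)
  ultimately show ?thesis using X by linarith
qed

lemma r_sub_add: assumes "A \<subseteq> E" "B \<subseteq> E" shows "r (A \<union> B) \<le> r A + card B"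
proof -
  have "r (A \<union> B) + r (A \<inter> B) \<le> r A + r B" using submod assms by blast
  moreover have "r B \<le> card B" using r_le_card assms finE finite_subset by blast
  ultimately show ?thesis by linarith
qed

lemma cl_mono_step:
  assumes "r (insert x A) = r A" "A \<subseteq> B" "B \<subseteq> E" "x \<in> E"
  shows "r (insert x B) = r B"
proof -
  have "r (B \<union> insert x A) + r (B \<inter> insert x A) \<le> r B + r (insert x A)"
    using submod assms by (metis insert_subset order_trans)
  moreover have "B \<union> insert x A = insert x B" using assms by blast
  moreover have "r A \<le> r (B \<inter> insert x A)" using assms by (intro r_mono) blast
  ultimately have "r (insert x B) + r A \<le> r B + r A" using assms(1) by simp
  then have "r (insert x B) \<le> r B" by linarith
  then show ?thesis using r_mono by (meson dual_order.antisym subset_insertI)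
qed

lemma span_add:
  assumes "finite S" "S \<subseteq> E" "A \<subseteq> E" "\<forall>x\<in>S. r (insert x A) = r A"
  shows "r (A \<union> S) = r A"
  using assms
proof (induction S rule: finite_induct)
  case empty then show ?case by simp
next
  case (insert s S)
  have "r (insert s (A \<union> S)) = r (A \<union> S)"
  proof (rule cl_mono_step[of s A])
    show "r (insert s A) = r A" using insert.prems by simp
    show "A \<subseteq> A \<union> S" by blast
    show "A \<union> S \<subseteq> E" using insert.prems by blast
    show "s \<in> E" using insert.prems by blast
  qed
  then show ?case using insert by simp
qed

definition cl where "cl A = {x \<in> E. r (insert x A) = r A}"

lemma cl_sub: "cl A \<subseteq> E" unfolding cl_def by blast
lemma cl_ext: "A \<subseteq> E \<Longrightarrow> A \<subseteq> cl A" unfolding cl_def by (auto simp: insert_absorb)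

lemma r_cl: assumes "A \<subseteq> E" shows "r (cl A) = r A"
proof -
  have "finite (cl A)" using finE cl_sub by (rule finite_subset[rotated])
  then have "r (A \<union> cl A) = r A" using assms cl_sub
    by (intro span_add) (simp_all add: cl_def)
  moreover have "A \<union> cl A = cl A" using cl_ext assms by blast
  ultimately show ?thesis by simp
qed

lemma flat_cl: assumes "A \<subseteq> E" shows "flat E I (cl A)"
  unfolding flat_def
proof (intro conjI ballI)
  show "cl A \<subseteq> E" by (rule cl_sub)
  fix e assume e: "e \<in> E - cl A"
  show "r (cl A) < r (insert e (cl A))"
  proof (rule ccontr)
    assume "\<not> ?thesis"
    then have "r (insert e (cl A)) \<le> r A" using r_cl assms by simp
    moreover have "r (insert e A) \<le> r (insert e (cl A))" using cl_ext assms by (intro r_mono) blast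
    moreover have "r A \<le> r (insert e A)" by (intro r_mono) blast
    ultimately have "e \<in> cl A" using e unfolding cl_def by simp
    then show False using e by blast
  qed
qed

lemma flat_cl_eq: assumes "flat E I F" shows "cl F = F"
proof
  show "F \<subseteq> cl F" using assms cl_ext unfolding flat_def by blast
  show "cl F \<subseteq> F"
  proof
    fix x assume x: "x \<in> cl F"
    show "x \<in> F"
    proof (rule ccontr)
      assume "x \<notin> F"
      then have "r F < r (insert x F)" using x assms cl_sub unfolding flat_def by blast
      then show False using x unfolding cl_def by simp
    qed
  qed
qed

lemma flat_rank_less: "flat E I F \<Longrightarrow> e \<in> E \<Longrightarrow> e \<notin> F \<Longrightarrow> r F < r (insert e F)"
  unfolding flat_def by blast

lemma flat_full: assumes "flat E I F" "r F = r E" shows "F = E"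
proof (rule ccontr)
  assume "F \<noteq> E"
  then obtain e where "e \<in> E" "e \<notin> F" using assms unfolding flat_def by blast
  then have "r F < r (insert e F)" using flat_rank_less assms by blast
  then show False using r_le_rE assms by (metis not_le)
qed

lemma circuit_nonempty: "circuit E I C \<Longrightarrow> C \<noteq> {}"
  unfolding circuit_def using empty_indep by blast

lemma circuit_fin: "circuit E I C \<Longrightarrow> finite C"
  unfolding circuit_def using finE finite_subset by blast

lemma circuit_minus: "circuit E I C \<Longrightarrow> x \<in> C \<Longrightarrow> C - {x} \<in> I"
  unfolding circuit_def by blast

lemma circuit_r: assumes "circuit E I C" shows "r C = card C - 1"
proof -
  obtain x where x: "x \<in> C" using circuit_nonempty assms by blast
  have "r (C - {x}) = card C - 1" using circuit_minus[OF assms x] indep_r circuit_fin[OF assms] x by simp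
  moreover have "r (C - {x}) \<le> r C" by (intro r_mono) blast
  moreover have "r C < card C" using dep_r assms unfolding circuit_def by blast
  ultimately show ?thesis by linarith
qed

lemma dep_circuit:
  assumes "X \<subseteq> E" "X \<notin> I"
  shows "\<exists>C. C \<subseteq> X \<and> circuit E I C"
proof -
  define S where "S = {C. C \<subseteq> X \<and> C \<notin> I}"
  have "X \<in> S" using assms S_def by blast
  then obtain C where C: "C \<in> S" "\<forall>D\<in>S. card C \<le> card D"
    using ex_has_least_nat[of "\<lambda>C. C \<in> S" X card] by blast
  have finX: "finite X" using assms finE finite_subset by blast
  have "\<forall>D. D \<subset> C \<longrightarrow> D \<in> I"
  proof (intro allI impI)
    fix D assume "D \<subset> C"
    moreover have "finite C" using C S_def finX finite_subset by blast
    ultimately have "card D < card C" by (simp add: psubset_card_mono)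
    then have "D \<notin> S" using C by (meson not_le)
    then show "D \<in> I" using \<open>D \<subset> C\<close> C S_def by blast
  qed
  then show ?thesis using C S_def assms unfolding circuit_def by blast
qed

lemma cyclic_circuit: "cyclic E I F \<Longrightarrow> x \<in> F \<Longrightarrow> \<exists>C. circuit E I C \<and> C \<subseteq> F \<and> x \<in> C"
  unfolding cyclic_def by blast

lemma cyclic_dep: assumes "cyclic E I F" "F \<noteq> {}" shows "F \<notin> I"
proof -
  obtain x where "x \<in> F" using assms by blast
  then obtain C where "circuit E I C" "C \<subseteq> F" using cyclic_circuit assms by blast
  then show ?thesis using down unfolding circuit_def by blast
qed

lemma circuit_sub: "circuit E I C \<Longrightarrow> C \<subseteq> E" unfolding circuit_def by blast

lemma cyclic_cl: assumes C: "circuit E I C" shows "cyclic E I (cl C)"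
  unfolding cyclic_def
proof
  show "\<Union> {D. circuit E I D \<and> D \<subseteq> cl C} \<subseteq> cl C" by blast
  show "cl C \<subseteq> \<Union> {D. circuit E I D \<and> D \<subseteq> cl C}"
  proof
    fix e assume e: "e \<in> cl C"
    have CE: "C \<subseteq> E" using C circuit_sub by blast
    show "e \<in> \<Union> {D. circuit E I D \<and> D \<subseteq> cl C}"
    proof (cases "e \<in> C")
      case True
      then show ?thesis using C cl_ext CE by blast
    next
      case False
      obtain x where x: "x \<in> C" using circuit_nonempty C by blast
      let ?B = "C - {x}"
      have BI: "?B \<in> I" using circuit_minus C x by blast
      have finC: "finite C" using circuit_fin C by blast
      have cB: "card ?B = card C - 1" using x finC by simp
      have "r (insert e ?B) \<le> r (insert e C)" by (intro r_mono) blast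
      also have "\<dots> = r C" using e unfolding cl_def by blast
      also have "\<dots> = card C - 1" using circuit_r C by blast
      finally have "r (insert e ?B) < card (insert e ?B)"
        using False cB finC by simp
      moreover have eE: "e \<in> E" using e cl_sub by blast
      ultimately have "insert e ?B \<notin> I" using indep_r by (metis less_irrefl)
      moreover have "insert e ?B \<subseteq> E" using CE eE by blast
      ultimately obtain D where D: "D \<subseteq> insert e ?B" "circuit E I D"
        using dep_circuit by blast
      have "e \<in> D"
      proof (rule ccontr)
        assume "e \<notin> D"
        then have "D \<subseteq> ?B" using D by blast
        then have "D \<in> I" using down BI by blast
        then show False using D unfolding circuit_def by blast
      qed
      moreover have "D \<subseteq> cl C" using D e cl_ext CE by blast
      ultimately show ?thesis using D by blast
    qed
  qed
qed

lemma cyclic_flat_cl: "circuit E I C \<Longrightarrow> cyclic_flat E I (cl C)"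
  unfolding cyclic_flat_def using cyclic_cl flat_cl circuit_sub by blast

end


lemma forb_ground_eq: "forb_ground = {Inl 0, Inr (Inl 0), Inr (Inl 1), Inr (Inr 0)}"
proof -
  have "{0..<1} = {0::nat}" "{0..<2} = {0::nat, 1}" by auto
  then show ?thesis by (auto simp add: forb_ground_def dsum_ground_def unif_ground_def)
qed

lemma card_le1_01: assumes "A \<subseteq> {0::nat, 1}" shows "card A \<le> 1 \<longleftrightarrow> \<not> (0 \<in> A \<and> 1 \<in> A)"
proof
  assume c: "card A \<le> 1"
  have "finite A" using assms finite_subset by blast
  show "\<not> (0 \<in> A \<and> 1 \<in> A)"
  proof
    assume "0 \<in> A \<and> 1 \<in> A"
    then have "{0::nat,1} \<subseteq> A" by blast
    then have "card {0::nat,1} \<le> card A" using \<open>finite A\<close> by (rule card_mono[rotated])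
    then show False using c by simp
  qed
next
  assume "\<not> (0 \<in> A \<and> 1 \<in> A)"
  then have "A \<subseteq> {0} \<or> A \<subseteq> {1}" using assms by blast
  then show "card A \<le> 1"
  proof
    assume "A \<subseteq> {0}" then have "card A \<le> card {0::nat}" by (rule card_mono[rotated]) simp
    then show ?thesis by simp
  next
    assume "A \<subseteq> {1}" then have "card A \<le> card {1::nat}" by (rule card_mono[rotated]) simp
    then show ?thesis by simp
  qed
qed

lemma forb_indep_char:
  "Z \<in> forb_indep \<longleftrightarrow> Z \<subseteq> forb_ground \<and> Inl 0 \<notin> Z \<and> \<not> (Inr (Inl 0) \<in> Z \<and> Inr (Inl 1) \<in> Z)"
proof -
  have e1: "{0..<1} = {0::nat}" "{0..<2} = {0::nat, 1}" by auto
  have a: "Inl -` Z \<in> unif_indep 0 1 \<longleftrightarrow> Inl -` Z = {}"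
  proof
    assume "Inl -` Z \<in> unif_indep 0 1"
    then have "Inl -` Z \<subseteq> {0}" "card (Inl -` Z) \<le> 0" using e1 by (auto simp: unif_indep_def)
    then show "Inl -` Z = {}" using finite_subset by fastforce
  qed (auto simp: unif_indep_def)
  have b: "Inr -` Inr -` Z \<in> unif_indep 1 1 \<longleftrightarrow> Inr -` Inr -` Z \<subseteq> {0}"
  proof
    assume "Inr -` Inr -` Z \<subseteq> {0}"
    then have "card (Inr -` Inr -` Z) \<le> card {0::nat}" by (rule card_mono[rotated]) simp
    then have "card (Inr -` Inr -` Z) \<le> 1" by simp
    then show "Inr -` Inr -` Z \<in> unif_indep 1 1" using \<open>Inr -` Inr -` Z \<subseteq> {0}\<close> e1 by (auto simp: unif_indep_def)
  qed (auto simp: unif_indep_def e1)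
  have c: "Inl -` Inr -` Z \<in> unif_indep 1 2 \<longleftrightarrow> Inl -` Inr -` Z \<subseteq> {0,1} \<and> \<not> (0 \<in> Inl -` Inr -` Z \<and> 1 \<in> Inl -` Inr -` Z)"
    using card_le1_01[of "Inl -` Inr -` Z"] e1 by (auto simp: unif_indep_def)
  have "Z \<in> forb_indep \<longleftrightarrow> Inl -` Z = {} \<and> Inl -` Inr -` Z \<subseteq> {0,1} \<and> \<not> (0 \<in> Inl -` Inr -` Z \<and> 1 \<in> Inl -` Inr -` Z) \<and> Inr -` Inr -` Z \<subseteq> {0}"
    unfolding forb_indep_def dsum_indep_def using a b c by auto
  also have "\<dots> \<longleftrightarrow> Z \<subseteq> forb_ground \<and> Inl 0 \<notin> Z \<and> \<not> (Inr (Inl 0) \<in> Z \<and> Inr (Inl 1) \<in> Z)"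
    unfolding forb_ground_eq
  proof
    assume H: "Inl -` Z = {} \<and> Inl -` Inr -` Z \<subseteq> {0,1} \<and> \<not> (0 \<in> Inl -` Inr -` Z \<and> 1 \<in> Inl -` Inr -` Z) \<and> Inr -` Inr -` Z \<subseteq> {0}"
    have "Z \<subseteq> {Inl 0, Inr (Inl 0), Inr (Inl 1), Inr (Inr 0)}"
    proof
      fix z assume z: "z \<in> Z"
      show "z \<in> {Inl 0, Inr (Inl 0), Inr (Inl 1), Inr (Inr 0)}"
      proof (cases z)
        case (Inl x)
        then have "x \<in> Inl -` Z" using z by simp
        then show ?thesis using H by blast
      next
        case (Inr w)
        show ?thesis
        proof (cases w)
          case (Inl y)
          then have "y \<in> Inl -` Inr -` Z" using z \<open>z = Inr w\<close> by simp
          then have "y = 0 \<or> y = 1" using H by blast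
          then show ?thesis using \<open>z = Inr w\<close> Inl by auto
        next
          case (Inr y)
          then have "y \<in> Inr -` Inr -` Z" using z \<open>z = Inr w\<close> by simp
          then have "y = 0" using H by blast
          then show ?thesis using \<open>z = Inr w\<close> Inr by auto
        qed
      qed
    qed
    then show "Z \<subseteq> {Inl 0, Inr (Inl 0), Inr (Inl 1), Inr (Inr 0)} \<and> Inl 0 \<notin> Z \<and> \<not> (Inr (Inl 0) \<in> Z \<and> Inr (Inl 1) \<in> Z)"
      using H by auto
  next
    assume H: "Z \<subseteq> {Inl 0, Inr (Inl 0), Inr (Inl 1), Inr (Inr 0)} \<and> Inl 0 \<notin> Z \<and> \<not> (Inr (Inl 0) \<in> Z \<and> Inr (Inl 1) \<in> Z)"
    then show "Inl -` Z = {} \<and> Inl -` Inr -` Z \<subseteq> {0,1} \<and> \<not> (0 \<in> Inl -` Inr -` Z \<and> 1 \<in> Inl -` Inr -` Z) \<and> Inr -` Inr -` Z \<subseteq> {0}"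
      by auto
  qed
  finally show ?thesis .
qed


context mat begin

lemma minor_indep_indep:
  assumes Y: "Y \<in> I" and X: "X \<subseteq> E - (Y \<union> D)"
  shows "X \<in> minor_indep E I Y D \<longleftrightarrow> X \<union> Y \<in> I"
proof -
  have YE: "Y \<subseteq> E" using Y indep_sub by blast
  have fin: "finite X" "finite Y" using X Y finE indep_fin finite_subset by blast+
  have cu: "card (X \<union> Y) = card X + card Y" using fin X by (intro card_Un_disjoint) auto
  have "X \<in> minor_indep E I Y D \<longleftrightarrow> r (X \<union> Y) = card X + r Y"
    using X unfolding minor_indep_def by blast
  also have "\<dots> \<longleftrightarrow> r (X \<union> Y) = card (X \<union> Y)" using cu indep_r Y by simp
  also have "\<dots> \<longleftrightarrow> X \<union> Y \<in> I" using indep_iff_r[of "X \<union> Y"] X YE by auto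
  finally show ?thesis .
qed

lemma forb_minor:
  assumes Y: "Y \<in> I" and inE: "l \<in> E" "p1 \<in> E" "p2 \<in> E" "c \<in> E"
    and dist: "l \<noteq> p1" "l \<noteq> p2" "l \<noteq> c" "p1 \<noteq> p2" "p1 \<noteq> c" "p2 \<noteq> c"
    and nY: "l \<notin> Y" "p1 \<notin> Y" "p2 \<notin> Y" "c \<notin> Y"
    and i1: "insert l Y \<notin> I" and i2: "insert p1 (insert c Y) \<in> I"
    and i3: "insert p2 (insert c Y) \<in> I" and i4: "insert p1 (insert p2 Y) \<notin> I"
  shows "\<not> elementary_split E I"
proof -
  define S where "S = {l, p1, p2, c}"
  define D where "D = E - Y - S"
  have YE: "Y \<subseteq> E" using Y indep_sub by blast
  have SE: "E - (Y \<union> D) = S" using S_def D_def inE nY by auto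
  define f :: "'a \<Rightarrow> nat + (nat + nat)" where "f x = (if x = l then Inl 0 else if x = p1 then Inr (Inl 0) else if x = p2 then Inr (Inl 1) else Inr (Inr (0::nat)))" for x
  have fl: "f l = Inl 0" and fp1: "f p1 = Inr (Inl 0)" and fp2: "f p2 = Inr (Inl 1)" and fc: "f c = Inr (Inr 0)"
    using dist by (auto simp: f_def)
  have bij: "bij_betw f S forb_ground"
  proof -
    have "inj_on f S" unfolding inj_on_def S_def using fl fp1 fp2 fc by auto
    moreover have "f ` S = forb_ground" unfolding forb_ground_eq S_def using fl fp1 fp2 fc by auto
    ultimately show ?thesis by (simp add: bij_betw_def)
  qed
  have key: "X \<in> minor_indep E I Y D \<longleftrightarrow> f ` X \<in> forb_indep" if X: "X \<subseteq> S" for X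
  proof -
    have "X \<in> minor_indep E I Y D \<longleftrightarrow> X \<union> Y \<in> I"
      using minor_indep_indep Y X SE by blast
    also have "\<dots> \<longleftrightarrow> l \<notin> X \<and> \<not> (p1 \<in> X \<and> p2 \<in> X)"
    proof
      assume H: "X \<union> Y \<in> I"
      show "l \<notin> X \<and> \<not> (p1 \<in> X \<and> p2 \<in> X)"
      proof
        show "l \<notin> X" using down[OF H, of "insert l Y"] i1 by blast
        show "\<not> (p1 \<in> X \<and> p2 \<in> X)" using down[OF H, of "insert p1 (insert p2 Y)"] i4 by blast
      qed
    next
      assume H: "l \<notin> X \<and> \<not> (p1 \<in> X \<and> p2 \<in> X)"
      show "X \<union> Y \<in> I"
      proof (cases "p1 \<in> X")
        case True
        then have "X \<subseteq> {p1, c}" using H X unfolding S_def by auto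
        then have "X \<union> Y \<subseteq> insert p1 (insert c Y)" by auto
        then show ?thesis using down[OF i2] by blast
      next
        case False
        then have "X \<subseteq> {p2, c}" using H X unfolding S_def by auto
        then have "X \<union> Y \<subseteq> insert p2 (insert c Y)" by auto
        then show ?thesis using down[OF i3] by blast
      qed
    qed
    also have "\<dots> \<longleftrightarrow> f ` X \<in> forb_indep"
    proof -
      have "f ` X \<subseteq> f ` S" using X by (rule image_mono)
      then have fX: "f ` X \<subseteq> forb_ground" using bij_betw_imp_surj_on[OF bij] by simp
      have fS: "x = l \<or> x = p1 \<or> x = p2 \<or> x = c" if "x \<in> X" for x
      proof -
        have "x \<in> S" using X that by blast
        then show ?thesis unfolding S_def by simp
      qed
      have "Inl 0 \<in> f ` X \<longleftrightarrow> l \<in> X"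
      proof
        assume "Inl 0 \<in> f ` X"
        then obtain x where x1: "Inl 0 = f x" and x0: "x \<in> X" by (rule imageE)
        have x: "x \<in> X" "f x = Inl 0" using x0 x1 by simp_all
        have "x \<noteq> p1" "x \<noteq> p2" "x \<noteq> c" using x(2) fp1 fp2 fc by auto
        then have "x = l" using fS[OF x(1)] by blast
        then show "l \<in> X" using x by simp
      next
        assume "l \<in> X" then show "Inl 0 \<in> f ` X" using imageI[of l X f] fl by simp
      qed
      moreover have "Inr (Inl 0) \<in> f ` X \<longleftrightarrow> p1 \<in> X"
      proof
        assume "Inr (Inl 0) \<in> f ` X"
        then obtain x where x1: "Inr (Inl 0) = f x" and x0: "x \<in> X" by (rule imageE)
        have x: "x \<in> X" "f x = Inr (Inl 0)" using x0 x1 by simp_all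
        have "x \<noteq> l" "x \<noteq> p2" "x \<noteq> c" using x(2) fl fp2 fc by auto
        then have "x = p1" using fS[OF x(1)] by blast
        then show "p1 \<in> X" using x by simp
      next
        assume "p1 \<in> X" then show "Inr (Inl 0) \<in> f ` X" using imageI[of p1 X f] fp1 by simp
      qed
      moreover have "Inr (Inl 1) \<in> f ` X \<longleftrightarrow> p2 \<in> X"
      proof
        assume "Inr (Inl 1) \<in> f ` X"
        then obtain x where x1: "Inr (Inl 1) = f x" and x0: "x \<in> X" by (rule imageE)
        have x: "x \<in> X" "f x = Inr (Inl 1)" using x0 x1 by simp_all
        have "x \<noteq> l" "x \<noteq> p1" "x \<noteq> c" using x(2) fl fp1 fc by auto
        then have "x = p2" using fS[OF x(1)] by blast
        then show "p2 \<in> X" using x by simp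
      next
        assume "p2 \<in> X" then show "Inr (Inl 1) \<in> f ` X" using imageI[of p2 X f] fp2 by simp
      qed
      ultimately show ?thesis using forb_indep_char[of "f ` X"] fX by blast
    qed
    finally show ?thesis .
  qed
  have mi: "miso (E - (Y \<union> D)) (minor_indep E I Y D) forb_ground forb_indep"
    unfolding miso_def SE by (intro exI[of _ f] conjI bij allI impI key)
  have d: "Y \<subseteq> E" "D \<subseteq> E" "Y \<inter> D = {}" using YE D_def by auto
  show ?thesis unfolding elementary_split_def not_not
    by (intro exI[of _ Y] exI[of _ D] conjI d mi)
qed

lemma basis_add:
  assumes B: "B \<in> I" "B \<subseteq> Z" "card B = r Z" and Z: "Z \<subseteq> E"
    and c: "c \<in> E" "r Z < r (insert c Z)"
  shows "insert c B \<in> I"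
proof (rule ccontr)
  assume H: "insert c B \<notin> I"
  have "c \<notin> Z" using c by (metis insert_absorb less_irrefl)
  then have cB: "c \<notin> B" using B by blast
  have finB: "finite B" using B indep_fin by blast
  have "insert c B \<subseteq> E" using B Z c by blast
  then have "r (insert c B) < card (insert c B)" using dep_r H by blast
  then have "r (insert c B) \<le> r B" using cB finB indep_r B by simp
  then have "r (insert c B) = r B" using r_mono by (meson le_antisym subset_insertI)
  then have "r (insert c Z) = r Z" using cl_mono_step B Z c by blast
  then show False using c by simp
qed

lemma two_cf:
  assumes ES: "elementary_split E I"
    and T: "cyclic_flat E I T" "T \<noteq> {}" and Z: "cyclic_flat E I Z" "T \<subset> Z" "r Z < r E"
  shows False
proof -
  have TE: "T \<subseteq> E" and ZE: "Z \<subseteq> E" using T Z unfolding cyclic_flat_def flat_def by blast+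
  have Tfl: "flat E I T" and Zfl: "flat E I Z" using T Z unfolding cyclic_flat_def by blast+
  have Tcy: "cyclic E I T" and Zcy: "cyclic E I Z" using T Z unfolding cyclic_flat_def by blast+
  obtain Y where Y: "Y \<in> I" "Y \<subseteq> T" "card Y = r T" using r_obt by blast
  have "T \<notin> I" using cyclic_dep Tcy T by blast
  then have "Y \<noteq> T" using Y by blast
  then obtain l where l: "l \<in> T" "l \<notin> Y" using Y by blast
  have finY: "finite Y" using Y indep_fin by blast
  have lY: "insert l Y \<notin> I"
  proof
    assume "insert l Y \<in> I"
    then have "card (insert l Y) \<le> r T" using r_ge Y l by blast
    then show False using Y l finY by simp
  qed
  obtain B where B: "Y \<subseteq> B" "B \<subseteq> Z" "B \<in> I" "card B = r Z"
    using extend[of Y Z] Y Z by blast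
  obtain z where z: "z \<in> Z" "z \<notin> T" using Z by blast
  have "r T < r (insert z T)" using flat_rank_less Tfl z ZE by blast
  also have "\<dots> \<le> r Z" using z Z by (intro r_mono) blast
  finally have rTZ: "r T < r Z" .
  have finB: "finite B" using B indep_fin by blast
  have "\<not> B \<subseteq> Y"
  proof
    assume "B \<subseteq> Y"
    then have "card B \<le> card Y" using finY by (rule card_mono[rotated])
    then show False using rTZ Y B by simp
  qed
  then obtain p1 where p1: "p1 \<in> B" "p1 \<notin> Y" by blast
  have p1T: "p1 \<notin> T"
  proof
    assume "p1 \<in> T"
    moreover have "insert p1 Y \<in> I" using down B p1 by blast
    ultimately have "card (insert p1 Y) \<le> r T" using r_ge Y by blast
    then show False using Y p1 finY by simp
  qed
  define Y' where "Y' = B - {p1}"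
  have Y'I: "Y' \<in> I" using down B Y'_def by blast
  have lB: "l \<notin> B" using lY down B by blast
  have lY': "insert l Y' \<notin> I"
  proof
    assume "insert l Y' \<in> I"
    moreover have "insert l Y \<subseteq> insert l Y'" using B p1 Y'_def by blast
    ultimately show False using lY down by blast
  qed
  have p1Z: "p1 \<in> Z" using B p1 by blast
  obtain Cp where Cp: "circuit E I Cp" "Cp \<subseteq> Z" "p1 \<in> Cp" using cyclic_circuit Zcy p1Z by blast
  have finCp: "finite Cp" using circuit_fin Cp by blast
  have "r (Cp - {p1}) = card Cp - 1" using circuit_minus Cp indep_r finCp by simp
  moreover have "r Cp = card Cp - 1" using circuit_r Cp by blast
  moreover have "insert p1 (Cp - {p1}) = Cp" using Cp by blast
  ultimately have "r (insert p1 (Cp - {p1})) = r (Cp - {p1})" by simp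
  then have "r (insert p1 (Z - {p1})) = r (Z - {p1})"
    using cl_mono_step[of p1 "Cp - {p1}" "Z - {p1}"] Cp ZE p1Z by blast
  moreover have "insert p1 (Z - {p1}) = Z" using p1Z by blast
  ultimately have rZp: "r (Z - {p1}) = r Z" by simp
  have "Y' \<subseteq> Z - {p1}" using Y'_def B by blast
  then obtain J where J: "Y' \<subseteq> J" "J \<subseteq> Z - {p1}" "J \<in> I" "card J = r Z"
    using extend[of Y' "Z - {p1}"] Y'I rZp by auto
  have cY': "card Y' = r Z - 1" using Y'_def B p1 finB by simp
  have rZpos: "r Z > 0" using rTZ by simp
  have "\<not> J \<subseteq> Y'"
  proof
    assume "J \<subseteq> Y'"
    moreover have "finite Y'" using finB Y'_def by simp
    ultimately have "card J \<le> card Y'" by (rule card_mono[rotated])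
    then show False using J cY' rZpos by simp
  qed
  then obtain p2 where p2: "p2 \<in> J" "p2 \<notin> Y'" by blast
  have p2Y': "insert p2 Y' \<in> I" using down J p2 by blast
  have p12: "p1 \<noteq> p2" using J p2 by blast
  have p2Z: "p2 \<in> Z" using J p2 by blast
  have p2B: "p2 \<notin> B" using p2 p12 Y'_def by blast
  have i4: "insert p1 (insert p2 Y') \<notin> I"
  proof
    assume H: "insert p1 (insert p2 Y') \<in> I"
    have "insert p1 (insert p2 Y') = insert p2 B" using Y'_def p1 by blast
    moreover have "insert p2 B \<subseteq> Z" using B p2Z by blast
    ultimately have "card (insert p2 B) \<le> r Z" using r_ge H by metis
    then show False using B p2B finB by simp
  qed
  have "Z \<noteq> E" using Z by auto
  then obtain c where c: "c \<in> E" "c \<notin> Z" using ZE by blast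
  have rc: "r Z < r (insert c Z)" using flat_rank_less Zfl c by blast
  have i2: "insert c B \<in> I" using basis_add B ZE c rc by blast
  have cardp2: "card (insert p2 Y') = r Z"
  proof -
    have "finite Y'" using Y'_def finB by simp
    then show ?thesis using cY' p2 rZpos by simp
  qed
  have i3: "insert c (insert p2 Y') \<in> I"
    using basis_add[of "insert p2 Y'" Z c] p2Y' cardp2 p2Z Y'_def B ZE c rc by blast
  have eq2: "insert p1 (insert c Y') = insert c B" using Y'_def p1 by blast
  have lp2: "l \<noteq> p2" using p2Y' lY' by blast
  have lc: "l \<noteq> c" using l c Z by blast
  have lE: "l \<in> E" using l TE by blast
  have p1E: "p1 \<in> E" and p2E: "p2 \<in> E" using p1Z p2Z ZE by blast+
  have lp1: "l \<noteq> p1" using l p1T by blast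
  have p1c: "p1 \<noteq> c" and p2c: "p2 \<noteq> c" using p1Z p2Z c by blast+
  have nY: "l \<notin> Y'" "p1 \<notin> Y'" "p2 \<notin> Y'" "c \<notin> Y'" using lB Y'_def p2 c B by blast+
  have i2': "insert p1 (insert c Y') \<in> I" using eq2 i2 by simp
  have i3': "insert p2 (insert c Y') \<in> I" using i3 by (simp add: insert_commute)
  have "\<not> elementary_split E I"
    by (rule forb_minor[OF Y'I lE p1E p2E c(1) lp1 lp2 lc p12 p1c p2c nY lY' i2' i3' i4])
  then show False using ES by blast
qed

end


context mat begin

definition NS where "NS = {F. cyclic_flat E I F \<and> F \<noteq> {} \<and> r F < r E}"

lemma NS_unique:
  assumes sch: "schubert E I" and es: "elementary_split E I" and F: "F \<in> NS" and G: "G \<in> NS"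
  shows "F = G"
proof -
  have "F \<subseteq> G \<or> G \<subseteq> F" using sch F G unfolding schubert_def NS_def by blast
  then show ?thesis
  proof
    assume "F \<subseteq> G"
    show ?thesis
    proof (rule ccontr)
      assume "F \<noteq> G"
      then have "F \<subset> G" using \<open>F \<subseteq> G\<close> by blast
      then show False using two_cf[OF es, of F G] F G unfolding NS_def by blast
    qed
  next
    assume "G \<subseteq> F"
    show ?thesis
    proof (rule ccontr)
      assume "F \<noteq> G"
      then have "G \<subset> F" using \<open>G \<subseteq> F\<close> by blast
      then show False using two_cf[OF es, of G F] F G unfolding NS_def by blast
    qed
  qed
qed

lemma circ_NS:
  assumes C: "circuit E I C" and cC: "card C \<le> r E"
  shows "cl C \<in> NS"
proof -
  have CE: "C \<subseteq> E" using circuit_sub C by blast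
  have "C \<noteq> {}" using circuit_nonempty C by blast
  moreover have "C \<subseteq> cl C" using cl_ext CE by blast
  ultimately have ne: "cl C \<noteq> {}" by blast
  have "card C > 0" using \<open>C \<noteq> {}\<close> circuit_fin C by (simp add: card_gt_0_iff)
  then have "r (cl C) < r E" using r_cl CE circuit_r C cC by simp
  then show ?thesis unfolding NS_def using cyclic_flat_cl C ne by blast
qed

lemma classify:
  assumes cusp: "cuspidal E I"
  shows "\<exists>T a. T \<subseteq> E \<and> I = {X. X \<subseteq> E \<and> card X \<le> r E \<and> card (X \<inter> T) \<le> a}
     \<and> ((T = {} \<and> a = 0) \<or> (a < r E \<and> a < card T \<and> card T + r E \<le> a + card E))"
proof -
  have sch: "schubert E I" and es: "elementary_split E I" using cusp unfolding cuspidal_def by blast+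
  have sub1: "I \<subseteq> {X. X \<subseteq> E \<and> card X \<le> r E \<and> card (X \<inter> T) \<le> r T}" for T
  proof
    fix X assume X: "X \<in> I"
    have "X \<inter> T \<in> I" using down X by blast
    then have "card (X \<inter> T) \<le> r T" using r_ge by blast
    moreover have "card X \<le> r E" using r_ge X indep_sub by blast
    ultimately show "X \<in> {X. X \<subseteq> E \<and> card X \<le> r E \<and> card (X \<inter> T) \<le> r T}"
      using indep_sub X by blast
  qed
  show ?thesis
  proof (cases "NS = {}")
    case True
    have "I = {X. X \<subseteq> E \<and> card X \<le> r E \<and> card (X \<inter> {}) \<le> 0}"
    proof
      show "I \<subseteq> {X. X \<subseteq> E \<and> card X \<le> r E \<and> card (X \<inter> {}) \<le> 0}"
        using sub1[of "{}"] by simp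
      show "{X. X \<subseteq> E \<and> card X \<le> r E \<and> card (X \<inter> {}) \<le> 0} \<subseteq> I"
      proof
        fix X assume X: "X \<in> {X. X \<subseteq> E \<and> card X \<le> r E \<and> card (X \<inter> {}) \<le> 0}"
        show "X \<in> I"
        proof (rule ccontr)
          assume "X \<notin> I"
          then obtain C where C: "C \<subseteq> X" "circuit E I C" using dep_circuit X by blast
          have "finite X" using X finE finite_subset by blast
          then have "card C \<le> card X" using C card_mono by blast
          then have "card C \<le> r E" using X by simp
          then have "cl C \<in> NS" using circ_NS C by blast
          then show False using True by blast
        qed
      qed
    qed
    then show ?thesis by blast
  next
    case False
    then obtain T where T: "T \<in> NS" by blast
    have TE: "T \<subseteq> E" using T unfolding NS_def cyclic_flat_def flat_def by blast
    have eqI: "I = {X. X \<subseteq> E \<and> card X \<le> r E \<and> card (X \<inter> T) \<le> r T}"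
    proof
      show "I \<subseteq> {X. X \<subseteq> E \<and> card X \<le> r E \<and> card (X \<inter> T) \<le> r T}" by (rule sub1)
      show "{X. X \<subseteq> E \<and> card X \<le> r E \<and> card (X \<inter> T) \<le> r T} \<subseteq> I"
      proof
        fix X assume X: "X \<in> {X. X \<subseteq> E \<and> card X \<le> r E \<and> card (X \<inter> T) \<le> r T}"
        show "X \<in> I"
        proof (rule ccontr)
          assume "X \<notin> I"
          then obtain C where C: "C \<subseteq> X" "circuit E I C" using dep_circuit X by blast
          have finX: "finite X" using X finE finite_subset by blast
          then have "card C \<le> card X" using C card_mono by blast
          then have "card C \<le> r E" using X by simp
          then have "cl C \<in> NS" using circ_NS C by blast
          then have clT: "cl C = T" using NS_unique[OF sch es _ T] by blast
          have CE: "C \<subseteq> E" using circuit_sub C by blast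
          have "C \<subseteq> T" using cl_ext[OF CE] clT by blast
          then have "C \<subseteq> X \<inter> T" using C by blast
          then have "card C \<le> card (X \<inter> T)" using finX by (intro card_mono) auto
          also have "\<dots> \<le> r T" using X by simp
          also have "\<dots> = r C" using clT r_cl[OF CE] by simp
          also have "\<dots> = card C - 1" using circuit_r C by blast
          finally have "card C \<le> card C - 1" .
          moreover have "card C > 0" using circuit_nonempty C circuit_fin C by (simp add: card_gt_0_iff)
          ultimately show False by linarith
        qed
      qed
    qed
    have p1: "r T < r E" using T unfolding NS_def by blast
    have "T \<notin> I" using cyclic_dep T unfolding NS_def cyclic_flat_def by blast
    then have p2: "r T < card T" using dep_r TE by blast
    have "T \<union> (E - T) = E" using TE by blast
    then have "r E = r (T \<union> (E - T))" by simp
    also have "\<dots> \<le> r T + card (E - T)" using r_sub_add TE by blast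
    finally have "r E \<le> r T + card (E - T)" .
    moreover have "card (E - T) = card E - card T" using card_Diff_subset[OF finite_subset[OF TE finE] TE] .
    moreover have "card T \<le> card E" using TE finE card_mono by blast
    ultimately have p3: "card T + r E \<le> r T + card E" by linarith
    show ?thesis using TE eqI p1 p2 p3 by blast
  qed
qed

end

definition LamI :: "nat \<Rightarrow> nat \<Rightarrow> nat \<Rightarrow> nat \<Rightarrow> nat set set" where
  "LamI k a b n = {X. X \<subseteq> {0..<n} \<and> card X \<le> k \<and> card (X \<inter> {0..<b}) \<le> a}"

definition Par :: "nat \<Rightarrow> nat \<Rightarrow> (nat \<times> nat) set" where
  "Par k n = {(a, b). (a < k \<and> a < b \<and> b + k \<le> a + n) \<or> (a = 0 \<and> b = 0)}"

lemma classify_Lam: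
  assumes "I \<in> cusp_set k n"
  shows "\<exists>p\<in>Par k n. miso {0..<n} I {0..<n} (LamI k (fst p) (snd p) n)"
proof -
  let ?E = "{0..<n}"
  have M: "matroid ?E I" and rk: "mrank I ?E = k" and cu: "cuspidal ?E I"
    using assms unfolding cusp_set_def by blast+
  interpret mat ?E I by (rule mat.intro[OF M])
  obtain T a where Ta: "T \<subseteq> ?E \<and> I = {X. X \<subseteq> ?E \<and> card X \<le> r ?E \<and> card (X \<inter> T) \<le> a}
     \<and> ((T = {} \<and> a = 0) \<or> (a < r ?E \<and> a < card T \<and> card T + r ?E \<le> a + card ?E))"
    using classify[OF cu] by (elim exE) (rule that)
  note Ta' = Ta[unfolded rk card_atLeastLessThan diff_zero]
  have T: "T \<subseteq> ?E" using conjunct1[OF Ta'] .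
  have eqI: "I = {X. X \<subseteq> ?E \<and> card X \<le> k \<and> card (X \<inter> T) \<le> a}" using conjunct1[OF conjunct2[OF Ta']] .
  have cases: "(T = {} \<and> a = 0) \<or> (a < k \<and> a < card T \<and> card T + k \<le> a + n)" using conjunct2[OF conjunct2[OF Ta']] .
  define b where "b = card T"
  have finT: "finite T" using finite_subset[OF T] by simp
  have "card T \<le> card ?E" using card_mono[OF _ T] by simp
  then have bn: "b \<le> n" using b_def by simp
  have "(a < k \<and> a < b \<and> b + k \<le> a + n) \<or> (a = 0 \<and> b = 0)"
    using cases
  proof (elim disjE conjE)
    assume "T = {}" "a = 0"
    then show ?thesis unfolding b_def by simp
  next
    assume "a < k" "a < card T" "card T + k \<le> a + n"
    then show ?thesis unfolding b_def by simp
  qed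
  then have par: "(a, b) \<in> Par k n" unfolding Par_def by simp
  obtain h1 where h1: "bij_betw h1 T {0..<b}" using finite_same_card_bij[of T "{0..<b}"] finT unfolding b_def by auto
  have "card (?E - T) = card {b..<n}" using T b_def finT by (simp add: card_Diff_subset)
  then obtain h2 where h2: "bij_betw h2 (?E - T) {b..<n}" using finite_same_card_bij[of "?E - T" "{b..<n}"] by auto
  define h where "h x = (if x \<in> T then h1 x else h2 x)" for x
  have "bij_betw h T {0..<b}" using h1 by (rule bij_betw_cong[THEN iffD1, rotated]) (simp add: h_def)
  moreover have "bij_betw h (?E - T) {b..<n}" using h2 by (rule bij_betw_cong[THEN iffD1, rotated]) (simp add: h_def)
  ultimately have "bij_betw h (T \<union> (?E - T)) ({0..<b} \<union> {b..<n})"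
    by (rule bij_betw_combine) auto
  moreover have "T \<union> (?E - T) = ?E" using T by blast
  moreover have "{0..<b} \<union> {b..<n} = ?E" using bn by auto
  ultimately have hb: "bij_betw h ?E ?E" by simp
  have "h ` T = h1 ` T" unfolding h_def by (rule image_cong) auto
  then have hT: "h ` T = {0..<b}" using bij_betw_imp_surj_on[OF h1] by simp
  have inj: "inj_on h ?E" using hb bij_betw_def by blast
  have key: "X \<in> I \<longleftrightarrow> h ` X \<in> LamI k a b n" if X: "X \<subseteq> ?E" for X
  proof -
    have c1: "card (h ` X) = card X" using card_image[OF inj_on_subset[OF inj X]] .
    have "h ` (X \<inter> T) = h ` X \<inter> h ` T" using inj_on_image_Int[OF inj X T] .
    then have "h ` X \<inter> {0..<b} = h ` (X \<inter> T)" using hT by simp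
    moreover have "X \<inter> T \<subseteq> ?E" using X by blast
    moreover have "card (h ` (X \<inter> T)) = card (X \<inter> T)" using card_image[OF inj_on_subset[OF inj \<open>X \<inter> T \<subseteq> ?E\<close>]] .
    ultimately have c2: "card (h ` X \<inter> {0..<b}) = card (X \<inter> T)" by simp
    have "h ` X \<subseteq> h ` ?E" using X by (rule image_mono)
    then have hX: "h ` X \<subseteq> ?E" using bij_betw_imp_surj_on[OF hb] by simp
    have "X \<in> I \<longleftrightarrow> X \<subseteq> ?E \<and> card X \<le> k \<and> card (X \<inter> T) \<le> a" by (subst eqI) simp
    moreover have "h ` X \<in> LamI k a b n \<longleftrightarrow> h ` X \<subseteq> ?E \<and> card (h ` X) \<le> k \<and> card (h ` X \<inter> {0..<b}) \<le> a"
      unfolding LamI_def by simp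
    ultimately show ?thesis using X hX c1 c2 by simp
  qed
  have "miso ?E I ?E (LamI k a b n)" unfolding miso_def by (intro exI[of _ h] conjI hb allI impI key)
  then show ?thesis using par by (intro bexI[of _ "(a, b)"]) simp_all
qed


definition gI :: "'a set \<Rightarrow> 'a set \<Rightarrow> nat \<Rightarrow> nat \<Rightarrow> 'a set set" where
  "gI E T k a = {X. X \<subseteq> E \<and> card X \<le> k \<and> card (X \<inter> T) \<le> a}"

lemma LamI_gI: "LamI k a b n = gI {0..<n} {0..<b} k a"
  unfolding LamI_def gI_def by simp

lemma card_split_T: "finite X \<Longrightarrow> card X = card (X \<inter> T) + card (X - T)"
  by (metis Diff_Diff_Int Diff_disjoint Int_Diff_Un Int_commute card_Un_disjoint finite_Diff finite_Int)

lemma gI_matroid: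
  assumes finE: "finite E"
  shows "matroid E (gI E T k a)"
  unfolding matroid_def
proof (intro conjI allI impI ballI)
  show "finite E" by (rule finE)
  show "\<And>X. X \<in> gI E T k a \<Longrightarrow> X \<subseteq> E" unfolding gI_def by blast
  show "{} \<in> gI E T k a" unfolding gI_def by simp
  fix X Y
  show "X \<in> gI E T k a \<Longrightarrow> Y \<subseteq> X \<Longrightarrow> Y \<in> gI E T k a"
  proof -
    assume X: "X \<in> gI E T k a" and Y: "Y \<subseteq> X"
    have finX: "finite X" using X finE finite_subset unfolding gI_def by blast
    have "card Y \<le> card X" using card_mono[OF finX Y] .
    moreover have "card (Y \<inter> T) \<le> card (X \<inter> T)" using finX Y by (intro card_mono) auto
    ultimately show "Y \<in> gI E T k a" using X Y unfolding gI_def by auto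
  qed
next
  fix X Y assume X: "X \<in> gI E T k a" and Y: "Y \<in> gI E T k a" and lt: "card X < card Y"
  have finX: "finite X" and finY: "finite Y" using X Y finE finite_subset unfolding gI_def by blast+
  have XE: "X \<subseteq> E" and Xk: "card X \<le> k" and XT: "card (X \<inter> T) \<le> a" using X unfolding gI_def by auto
  have YE: "Y \<subseteq> E" and Yk: "card Y \<le> k" and YT: "card (Y \<inter> T) \<le> a" using Y unfolding gI_def by auto
  show "\<exists>e\<in>Y - X. insert e X \<in> gI E T k a"
  proof (cases "card (X \<inter> T) < a")
    case True
    have "\<not> Y \<subseteq> X" using lt card_mono[OF finX] by (meson not_le)
    then obtain e where e: "e \<in> Y" "e \<notin> X" by blast
    have "card (insert e X) = Suc (card X)" using e finX by simp
    moreover have "card (insert e X \<inter> T) \<le> Suc (card (X \<inter> T))"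
    proof -
      have "insert e X \<inter> T \<subseteq> insert e (X \<inter> T)" by blast
      then have "card (insert e X \<inter> T) \<le> card (insert e (X \<inter> T))" using finX by (intro card_mono) auto
      also have "\<dots> \<le> Suc (card (X \<inter> T))" using finX by (simp add: card_insert_if)
      finally show ?thesis .
    qed
    ultimately have "insert e X \<in> gI E T k a" using True lt Yk e YE XE unfolding gI_def by auto
    then show ?thesis using e by blast
  next
    case False
    have "card (Y - T) > card (X - T)"
      using card_split_T[OF finX, of T] card_split_T[OF finY, of T] False YT lt by linarith
    then have "\<not> (Y - T) \<subseteq> (X - T)" using card_mono[OF finite_Diff[OF finX]] by (meson not_le)
    then obtain e where e: "e \<in> Y" "e \<notin> T" "e \<notin> X" by blast
    have "card (insert e X) = Suc (card X)" using e finX by simp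
    moreover have "insert e X \<inter> T = X \<inter> T" using e by blast
    ultimately have "insert e X \<in> gI E T k a" using XT lt Yk e YE XE unfolding gI_def by auto
    then show ?thesis using e by blast
  qed
qed

lemma gI_rank:
  assumes finE: "finite E" and ak: "a \<le> k" and A: "A \<subseteq> E"
  shows "mrank (gI E T k a) A = min k (min (card A) (a + card (A - T)))"
proof -
  interpret mat E "gI E T k a" by (rule mat.intro[OF gI_matroid[OF finE]])
  have finA: "finite A" using A finE finite_subset by blast
  have up: "card X \<le> min k (min (card A) (a + card (A - T)))" if X: "X \<in> gI E T k a" "X \<subseteq> A" for X
  proof -
    have finX: "finite X" using X finA finite_subset by blast
    have "card X \<le> k" "card (X \<inter> T) \<le> a" using X unfolding gI_def by auto
    moreover have "card X \<le> card A" using card_mono[OF finA X(2)] .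
    moreover have "card (X - T) \<le> card (A - T)" using X finA by (intro card_mono) auto
    moreover have "card X = card (X \<inter> T) + card (X - T)" using card_split_T[OF finX] .
    ultimately show ?thesis by linarith
  qed
  define m1 where "m1 = min (card (A \<inter> T)) a"
  obtain X1 where X1: "X1 \<subseteq> A \<inter> T" "card X1 = m1" "finite X1"
    using obtain_subset_with_card_n[of m1 "A \<inter> T"] m1_def by auto
  define m2 where "m2 = min (card (A - T)) (k - m1)"
  obtain X2 where X2: "X2 \<subseteq> A - T" "card X2 = m2" "finite X2"
    using obtain_subset_with_card_n[of m2 "A - T"] m2_def by auto
  have disj: "X1 \<inter> X2 = {}" using X1 X2 by blast
  have cX: "card (X1 \<union> X2) = m1 + m2" using card_Un_disjoint[OF X1(3) X2(3) disj] X1 X2 by simp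
  have XT: "(X1 \<union> X2) \<inter> T = X1" using X1 X2 by blast
  have m1a: "m1 \<le> a" using m1_def by simp
  have inI: "X1 \<union> X2 \<in> gI E T k a"
    unfolding gI_def using X1 X2 A cX XT m1a ak m2_def by auto
  have sub: "X1 \<union> X2 \<subseteq> A" using X1 X2 by blast
  have "card A = card (A \<inter> T) + card (A - T)" using card_split_T[OF finA] .
  then have "m1 + m2 = min k (min (card A) (a + card (A - T)))"
    using m1_def m2_def ak unfolding min_def by (auto split: if_splits)
  then have lo: "min k (min (card A) (a + card (A - T))) \<le> r A" using r_ge[OF inI sub] cX by simp
  obtain X where X: "X \<in> gI E T k a" "X \<subseteq> A" "card X = r A" using r_obt by blast
  have "r A \<le> min k (min (card A) (a + card (A - T)))" using up[OF X(1,2)] X(3) by simp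
  then show ?thesis using lo by (rule antisym)
qed

lemma arith_forb:
  fixes k m t a bl b1 b2 bc :: nat
  assumes "bl \<le> 1" "b1 \<le> 1" "b2 \<le> 1" "bc \<le> 1"
    and h1: "min k (min (m+1) (a + t + bl)) \<noteq> 1 + min k (min m (a + t))"
    and h2: "min k (min (m+1) (a + t + b2)) = 1 + min k (min m (a + t))"
    and h3: "min k (min (m+2) (a + t + b1 + bc)) = 2 + min k (min m (a + t))"
    and h4: "min k (min (m+2) (a + t + b1 + b2)) \<noteq> 2 + min k (min m (a + t))"
  shows False
proof -
  define r where "r = min k (min m (a + t))"
  have le3: "min k (min x z) \<le> k" "min k (min x z) \<le> x" "min k (min x z) \<le> z" for x z :: nat
    by simp_all
  have rk: "1 + r \<le> k" using h2 le3(1)[of "m+1" "a+t+b2"] unfolding r_def by linarith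
  show False
  proof (cases "a + t \<le> m")
    case True
    then have r: "r = min k (a + t)" unfolding r_def by (simp add: min.absorb1)
    then have ra: "r = a + t" using rk by (simp add: min_def split: if_splits)
    have "2 + r \<le> a + t + b1 + bc" using h3 le3(3)[of "m+2" "a+t+b1+bc"] unfolding r_def by linarith
    then have b1c: "b1 = 1" "bc = 1" using ra assms(2,4) by linarith+
    have "1 + r \<le> a + t + b2" using h2 le3(3)[of "m+1" "a+t+b2"] unfolding r_def by linarith
    then have "b2 = 1" using ra assms(3) by linarith
    then have "a + t + b1 + b2 = a + t + b1 + bc" using b1c by simp
    then show False using h3 h4 by simp
  next
    case False
    then have "r = min k m" unfolding r_def by (simp add: min.absorb2)
    then have rm: "r = m" using rk by (simp add: min_def split: if_splits)
    have "min k (min (m+1) (a + t + bl)) = m + 1"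
      using rk rm False by (simp add: min_def)
    then show False using h1 rm unfolding r_def by simp
  qed
qed

lemma card_insert_diff:
  assumes "finite C" "x \<notin> C"
  shows "card (insert x C - T) = card (C - T) + (if x \<in> T then 0 else 1)"
proof (cases "x \<in> T")
  case True
  then have "insert x C - T = C - T" by blast
  then show ?thesis using True by simp
next
  case False
  then have "insert x C - T = insert x (C - T)" by blast
  then show ?thesis using False assms by simp
qed


lemma gI_cf:
  assumes finE: "finite E" and ak: "a \<le> k" and TE: "T \<subseteq> E"
    and F: "cyclic_flat E (gI E T k a) F"
  shows "F = {} \<or> F = T \<or> F = E"
proof -
  interpret mat E "gI E T k a" by (rule mat.intro[OF gI_matroid[OF finE]])
  have R: "r A = min k (min (card A) (a + card (A - T)))" if "A \<subseteq> E" for A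
    using gI_rank[OF finE ak that] .
  have FE: "F \<subseteq> E" and fl: "flat E (gI E T k a) F" and cy: "cyclic E (gI E T k a) F"
    using F unfolding cyclic_flat_def flat_def by blast+
  show ?thesis
  proof (cases "F \<subseteq> T")
    case True
    show ?thesis
    proof (cases "F = {}")
      case False
      then obtain x where "x \<in> F" by blast
      then obtain C where C: "circuit E (gI E T k a) C" "C \<subseteq> F" "x \<in> C" using cyclic_circuit cy by blast
      have CE: "C \<subseteq> E" using circuit_sub C by blast
      have finC: "finite C" using circuit_fin C by blast
      have c1: "card C \<ge> 1" using C finC by (metis One_nat_def Suc_leI card_gt_0_iff empty_iff)
      have "C - T = {}" using C True by blast
      then have "card (C - T) = 0" by (metis card.empty)
      then have "r C = min k (min (card C) a)" using R[OF CE] by simp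
      moreover have "r C = card C - 1" using circuit_r C by blast
      ultimately have "min k (min (card C) a) = card C - 1" by simp
      then have ra: "a = card C - 1" using ak c1 by (simp add: min_def split: if_splits)
      have "r C \<le> r F" using C by (intro r_mono) blast
      then have aF: "a \<le> r F" using ra \<open>r C = card C - 1\<close> by simp
      have "T \<subseteq> F"
      proof
        fix e assume e: "e \<in> T"
        show "e \<in> F"
        proof (rule ccontr)
          assume eF: "e \<notin> F"
          have eE: "e \<in> E" using e TE by blast
          have "insert e F - T = {}" using e True by blast
          then have "card (insert e F - T) = 0" by (metis card.empty)
          moreover have "r (insert e F) = min k (min (card (insert e F)) (a + card (insert e F - T)))"
            using R[of "insert e F"] eE FE by blast
          ultimately have "r (insert e F) \<le> a" by simp
          moreover have "r F < r (insert e F)" using flat_rank_less fl eE eF by blast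
          ultimately show False using aF by simp
        qed
      qed
      then show ?thesis using True by blast
    qed simp
  next
    case False
    then obtain x where x: "x \<in> F" "x \<notin> T" by blast
    then obtain C where C: "circuit E (gI E T k a) C" "C \<subseteq> F" "x \<in> C" using cyclic_circuit cy by blast
    have CE: "C \<subseteq> E" using circuit_sub C by blast
    have finC: "finite C" using circuit_fin C by blast
    have c1: "card C \<ge> 1" using C finC by (metis One_nat_def Suc_leI card_gt_0_iff empty_iff)
    have rC: "r C = card C - 1" using circuit_r C by blast
    have "C - {x} \<in> gI E T k a" using circuit_minus C by blast
    then have "r (C - {x}) = card C - 1" using indep_r finC C by simp
    moreover have "r (C - {x}) = min k (min (card (C - {x})) (a + card (C - {x} - T)))"
      using R[of "C - {x}"] CE by blast
    moreover have "card (C - {x}) = card C - 1" using C finC by simp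
    moreover have "card (C - {x} - T) = card (C - T) - 1"
    proof -
      have "C - {x} - T = (C - T) - {x}" by blast
      moreover have "x \<in> C - T" using C x by blast
      ultimately show ?thesis using finC by simp
    qed
    moreover have "card (C - T) \<ge> 1"
    proof -
      have "x \<in> C - T" using C x by blast
      then show ?thesis using finC by (metis One_nat_def Suc_leI card_gt_0_iff empty_iff finite_Diff)
    qed
    ultimately have "a + card (C - T) \<ge> card C" by (simp add: min_def split: if_splits)
    then have "r C = min k (card C)" using R[OF CE] by (simp add: min_def)
    then have rCk: "r C = k" using rC c1 by (simp add: min_def split: if_splits)
    have "r E \<le> k" using R[of E] by simp
    moreover have "r C \<le> r F" using C by (intro r_mono) blast
    moreover have "r F \<le> r E" by (rule r_le_rE)
    ultimately have "r F = r E" using rCk by simp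
    then have "F = E" using flat_full fl by blast
    then show ?thesis by blast
  qed
qed

lemma gI_schubert:
  assumes finE: "finite E" and ak: "a \<le> k" and TE: "T \<subseteq> E"
  shows "schubert E (gI E T k a)"
  unfolding schubert_def
proof (intro allI impI)
  fix F G assume F: "cyclic_flat E (gI E T k a) F" and G: "cyclic_flat E (gI E T k a) G"
  have "F = {} \<or> F = T \<or> F = E" using gI_cf[OF finE ak TE F] .
  moreover have "G = {} \<or> G = T \<or> G = E" using gI_cf[OF finE ak TE G] .
  ultimately show "F \<subseteq> G \<or> G \<subseteq> F" using TE by (elim disjE) simp_all
qed

lemma gI_es:
  assumes finE: "finite E" and ak: "a \<le> k"
  shows "elementary_split E (gI E T k a)"
  unfolding elementary_split_def
proof
  let ?J = "gI E T k a"
  interpret mat E ?J by (rule mat.intro[OF gI_matroid[OF finE]])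
  have R: "r A = min k (min (card A) (a + card (A - T)))" if "A \<subseteq> E" for A
    using gI_rank[OF finE ak that] .
  assume "\<exists>C D. C \<subseteq> E \<and> D \<subseteq> E \<and> C \<inter> D = {} \<and> miso (E - (C \<union> D)) (minor_indep E ?J C D) forb_ground forb_indep"
  then obtain C D where CE: "C \<subseteq> E" and mi: "miso (E - (C \<union> D)) (minor_indep E ?J C D) forb_ground forb_indep"
    by blast
  define S where "S = E - (C \<union> D)"
  obtain f where bij: "bij_betw f S forb_ground"
    and key: "\<And>X. X \<subseteq> S \<Longrightarrow> X \<in> minor_indep E ?J C D \<longleftrightarrow> f ` X \<in> forb_indep"
    using mi unfolding miso_def S_def by blast
  define g where "g = inv_into S f"
  have gS: "y \<in> forb_ground \<Longrightarrow> g y \<in> S" for y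
    unfolding g_def using bij_betw_imp_surj_on[OF bij] by (metis inv_into_into)
  have fg: "y \<in> forb_ground \<Longrightarrow> f (g y) = y" for y
    unfolding g_def using bij_betw_inv_into_right[OF bij] by blast
  define l where "l = g (Inl 0)"
  define p1 where "p1 = g (Inr (Inl 0))"
  define p2 where "p2 = g (Inr (Inl 1))"
  define c where "c = g (Inr (Inr 0))"
  have inG: "Inl 0 \<in> forb_ground" "Inr (Inl 0) \<in> forb_ground" "Inr (Inl 1) \<in> forb_ground" "Inr (Inr 0) \<in> forb_ground"
    unfolding forb_ground_eq by simp_all
  have fl: "f l = Inl 0" and fp1: "f p1 = Inr (Inl 0)" and fp2: "f p2 = Inr (Inl 1)" and fc: "f c = Inr (Inr 0)"
    unfolding l_def p1_def p2_def c_def using fg inG by simp_all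
  have lS: "l \<in> S" and p1S: "p1 \<in> S" and p2S: "p2 \<in> S" and cS: "c \<in> S"
    unfolding l_def p1_def p2_def c_def using gS inG by simp_all
  have d: "l \<noteq> p1" "l \<noteq> p2" "l \<noteq> c" "p1 \<noteq> p2" "p1 \<noteq> c" "p2 \<noteq> c"
    using fl fp1 fp2 fc by (auto dest: arg_cong[of _ _ f])
  have nC: "l \<notin> C" "p1 \<notin> C" "p2 \<notin> C" "c \<notin> C" using lS p1S p2S cS S_def by blast+
  have inE: "l \<in> E" "p1 \<in> E" "p2 \<in> E" "c \<in> E" using lS p1S p2S cS S_def by blast+
  have finC: "finite C" using CE finE finite_subset by blast
  have mem: "X \<in> minor_indep E ?J C D \<longleftrightarrow> r (X \<union> C) = card X + r C" if "X \<subseteq> S" for X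
    using that unfolding minor_indep_def S_def by blast
  have h1: "r (insert l C) \<noteq> 1 + r C"
  proof -
    have "f ` {l} = {Inl 0}" using fl by simp
    then have "f ` {l} \<notin> forb_indep" using forb_indep_char by blast
    then have "{l} \<notin> minor_indep E ?J C D" using key[of "{l}"] lS by blast
    then show ?thesis using mem[of "{l}"] lS by simp
  qed
  have h2: "r (insert p2 C) = 1 + r C"
  proof -
    have "f ` {p2} = {Inr (Inl 1)}" using fp2 by simp
    then have "f ` {p2} \<in> forb_indep" using forb_indep_char inG by simp
    then have "{p2} \<in> minor_indep E ?J C D" using key[of "{p2}"] p2S by blast
    then show ?thesis using mem[of "{p2}"] p2S by simp
  qed
  have h3: "r (insert p1 (insert c C)) = 2 + r C"
  proof -
    have "f ` {p1, c} = {Inr (Inl 0), Inr (Inr 0)}" using fp1 fc by simp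
    then have "f ` {p1, c} \<in> forb_indep" using forb_indep_char inG by simp
    then have "{p1, c} \<in> minor_indep E ?J C D" using key[of "{p1, c}"] p1S cS by blast
    moreover have "card {p1, c} = 2" using d by simp
    ultimately show ?thesis using mem[of "{p1, c}"] p1S cS by simp
  qed
  have h4: "r (insert p1 (insert p2 C)) \<noteq> 2 + r C"
  proof -
    have "f ` {p1, p2} = {Inr (Inl 0), Inr (Inl 1)}" using fp1 fp2 by simp
    then have "f ` {p1, p2} \<notin> forb_indep" using forb_indep_char by simp
    then have "{p1, p2} \<notin> minor_indep E ?J C D" using key[of "{p1, p2}"] p1S p2S by blast
    moreover have "card {p1, p2} = 2" using d by simp
    ultimately show ?thesis using mem[of "{p1, p2}"] p1S p2S by simp
  qed
  define bt where "bt x = (if x \<in> T then 0 else 1::nat)" for x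
  have ci: "card (insert x C) = card C + 1" "card (insert x C - T) = card (C - T) + bt x"
    if "x \<notin> C" for x using that finC card_insert_diff[OF finC that] unfolding bt_def by simp_all
  have ci2: "card (insert x (insert y C)) = card C + 2" "card (insert x (insert y C) - T) = card (C - T) + bt y + bt x"
    if "x \<notin> C" "y \<notin> C" "x \<noteq> y" for x y
  proof -
    have "x \<notin> insert y C" using that by simp
    moreover have "finite (insert y C)" using finC by simp
    ultimately show "card (insert x (insert y C)) = card C + 2" "card (insert x (insert y C) - T) = card (C - T) + bt y + bt x"
      using ci[OF that(2)] card_insert_diff[of "insert y C" x T] unfolding bt_def by simp_all
  qed
  have e0: "r C = min k (min (card C) (a + card (C - T)))" using R[OF CE] .
  have e1: "r (insert l C) = min k (min (card C + 1) (a + card (C - T) + bt l))"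
    using R[of "insert l C"] CE inE ci[OF nC(1)] by (simp add: algebra_simps)
  have e2: "r (insert p2 C) = min k (min (card C + 1) (a + card (C - T) + bt p2))"
    using R[of "insert p2 C"] CE inE ci[OF nC(3)] by (simp add: algebra_simps)
  have e3: "r (insert p1 (insert c C)) = min k (min (card C + 2) (a + card (C - T) + bt p1 + bt c))"
    using R[of "insert p1 (insert c C)"] CE inE ci2[OF nC(2) nC(4) d(5)] by (simp add: algebra_simps)
  have e4: "r (insert p1 (insert p2 C)) = min k (min (card C + 2) (a + card (C - T) + bt p1 + bt p2))"
    using R[of "insert p1 (insert p2 C)"] CE inE ci2[OF nC(2) nC(3) d(4)] by (simp add: algebra_simps)
  have bt1: "bt x \<le> 1" for x unfolding bt_def by simp
  have H1: "min k (min (card C + 1) (a + card (C - T) + bt l)) \<noteq> 1 + min k (min (card C) (a + card (C - T)))"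
    using h1 unfolding e0 e1 .
  have H2: "min k (min (card C + 1) (a + card (C - T) + bt p2)) = 1 + min k (min (card C) (a + card (C - T)))"
    using h2 unfolding e0 e2 .
  have H3: "min k (min (card C + 2) (a + card (C - T) + bt p1 + bt c)) = 2 + min k (min (card C) (a + card (C - T)))"
    using h3 unfolding e0 e3 .
  have H4: "min k (min (card C + 2) (a + card (C - T) + bt p1 + bt p2)) \<noteq> 2 + min k (min (card C) (a + card (C - T)))"
    using h4 unfolding e0 e4 .
  show False by (rule arith_forb[OF bt1 bt1 bt1 bt1 H1 H2 H3 H4])
qed

lemma gI_cusp:
  assumes finE: "finite E" and ak: "a \<le> k" and TE: "T \<subseteq> E"
  shows "cuspidal E (gI E T k a)"
  unfolding cuspidal_def using gI_schubert[OF assms] gI_es[OF finE ak] by blast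

lemma Lam_cusp:
  assumes p: "(a, b) \<in> Par k n" and kn: "k \<le> n"
  shows "LamI k a b n \<in> cusp_set k n"
proof -
  have ak: "a \<le> k" and bn: "b \<le> n" and abk: "k \<le> a + (n - b)" using p kn unfolding Par_def by auto
  have TE: "{0..<b} \<subseteq> {0..<n}" using bn by auto
  have "mrank (gI {0..<n} {0..<b} k a) {0..<n} = min k (min n (a + card ({0..<n} - {0..<b})))"
    using gI_rank[OF _ ak, of "{0..<n}" "{0..<n}" "{0..<b}"] by simp
  moreover have "card ({0..<n} - {0..<b}) = n - b" using TE by (simp add: card_Diff_subset)
  ultimately have "mrank (gI {0..<n} {0..<b} k a) {0..<n} = k" using kn abk by simp
  moreover have "matroid {0..<n} (gI {0..<n} {0..<b} k a)" by (rule gI_matroid) simp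
  moreover have "cuspidal {0..<n} (gI {0..<n} {0..<b} k a)" by (rule gI_cusp[OF _ ak TE]) simp
  ultimately show ?thesis unfolding cusp_set_def LamI_gI by blast
qed


section \<open>Shift homomorphism on Z[x][y]\<close>

lemma map_poly_add_hom:
  assumes "f 0 = 0" "\<And>x y. f (x + y) = f x + f y"
  shows "map_poly f (p + q) = map_poly f p + map_poly f q"
  by (intro poly_eqI) (simp add: coeff_map_poly assms)

lemma map_poly_diff_hom:
  assumes "f 0 = 0" "\<And>x y. f (x - y) = f x - f y"
  shows "map_poly f (p - q) = map_poly f p - map_poly f q"
  by (intro poly_eqI) (simp add: coeff_map_poly assms)

lemma map_poly_mult_hom:
  fixes f :: "'a::comm_ring_1 \<Rightarrow> 'b::comm_ring_1"
  assumes f0: "f 0 = 0" and fa: "\<And>x y. f (x + y) = f x + f y" and fm: "\<And>x y. f (x * y) = f x * f y"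
  shows "map_poly f (p * q) = map_poly f p * map_poly f q"
proof (induction p rule: pCons_induct)
  case 0
  then show ?case by simp
next
  case (pCons a p)
  have "map_poly f (pCons a p * q) = map_poly f (smult a q + pCons 0 (p * q))" by simp
  also have "\<dots> = smult (f a) (map_poly f q) + pCons 0 (map_poly f (p * q))"
    by (simp add: map_poly_add_hom[OF f0 fa] map_poly_smult[where f=f, OF f0 fm] map_poly_pCons[where f=f, OF f0] f0)
  also have "\<dots> = map_poly f (pCons a p) * map_poly f q"
    using pCons.IH by (simp add: map_poly_pCons[where f=f, OF f0])
  finally show ?case .
qed

definition sh :: "int poly \<Rightarrow> int poly" where "sh q = pcompose q [:1, 1:]"

definition sig :: "int poly poly \<Rightarrow> int poly poly" where
  "sig P = pcompose (map_poly sh P) [:1, 1:]"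

lemma sh0: "sh 0 = 0" and sha: "sh (x + y) = sh x + sh y" and shd: "sh (x - y) = sh x - sh y"
  and shm: "sh (x * y) = sh x * sh y" and sh1: "sh 1 = 1"
  unfolding sh_def by (simp_all add: pcompose_add pcompose_diff pcompose_mult pcompose_1)

lemma sig_add: "sig (P + Q) = sig P + sig Q"
  unfolding sig_def by (simp add: map_poly_add_hom[OF sh0 sha] pcompose_add)

lemma sig_diff: "sig (P - Q) = sig P - sig Q"
  unfolding sig_def by (simp add: map_poly_diff_hom[OF sh0 shd] pcompose_diff)

lemma sig_mult: "sig (P * Q) = sig P * sig Q"
  unfolding sig_def by (simp add: map_poly_mult_hom[OF sh0 sha shm] pcompose_mult)

lemma sig_1: "sig 1 = 1"
  unfolding sig_def by (simp add: sh1 pcompose_1)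

lemma sig_0: "sig 0 = 0"
  unfolding sig_def by simp

lemma sig_power: "sig (P ^ m) = sig P ^ m"
  by (induction m) (simp_all add: sig_1 sig_mult)

lemma sig_sum: "sig (sum g A) = sum (\<lambda>x. sig (g x)) A"
  by (induction A rule: infinite_finite_induct) (simp_all add: sig_0 sig_add)

lemma sig_varX: "sig varX = varX + 1"
proof -
  have "sh [:0, 1:] = [:1, 1:]" unfolding sh_def by (simp add: pcompose_pCons)
  then have "map_poly sh varX = [:[:1, 1:]:]" unfolding varX_def by (simp add: map_poly_pCons sh0)
  moreover have "varX + 1 = [:[:1, 1:]:]"
  proof -
    have o: "(1::int poly poly) = [:[:1:]:]" by (simp add: pCons_one)
    show ?thesis unfolding varX_def o by simp
  qed
  ultimately show ?thesis unfolding sig_def by simp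
qed

lemma sig_varY: "sig varY = varY + 1"
proof -
  have "map_poly sh varY = [:0, 1:]" unfolding varY_def by (simp add: map_poly_pCons sh0 sh1)
  then have "sig varY = pcompose [:0, 1:] [:1, 1:]" unfolding sig_def by simp
  also have "\<dots> = [:1, 1:]" by (simp add: pcompose_pCons)
  also have "\<dots> = varY + 1"
  proof -
    have o: "(1::int poly poly) = [:1:]" by (simp add: pCons_one)
    show ?thesis unfolding varY_def o by simp
  qed
  finally show ?thesis .
qed

lemma sig_term: "sig ((varX - 1) ^ u * (varY - 1) ^ v) = monom (monom 1 u) v"
proof -
  have "sig ((varX - 1) ^ u * (varY - 1) ^ v) = varX ^ u * varY ^ v"
    by (simp add: sig_mult sig_power sig_diff sig_1 sig_varX sig_varY)
  also have "varX ^ u = [:monom 1 u:]"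
  proof -
    have "varX ^ u = [:[:0, 1:] ^ u:]" unfolding varX_def by (induction u) (simp_all add: pCons_one)
    moreover have "[:0, 1:] ^ u = monom (1::int) u" by (simp add: monom_altdef)
    ultimately show ?thesis by simp
  qed
  also have "varY ^ v = monom 1 v" unfolding varY_def by (simp add: monom_altdef)
  also have "[:monom 1 u:] * monom 1 v = monom (monom (1::int) u) v" by (simp add: smult_monom)
  finally show ?thesis .
qed

definition Lc :: "nat \<Rightarrow> nat \<Rightarrow> int poly poly \<Rightarrow> int" where
  "Lc i j P = coeff (coeff (sig P) j) i"

lemma Lc_add: "Lc i j (P + Q) = Lc i j P + Lc i j Q"
  unfolding Lc_def by (simp add: sig_add)

lemma Lc_sum: "Lc i j (sum g A) = (\<Sum>x\<in>A. Lc i j (g x))"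
  unfolding Lc_def by (simp add: sig_sum coeff_sum)

lemma Lc_zero: "Lc i j 0 = 0"
  unfolding Lc_def by (simp add: sig_0)

lemma sig_of_int: "sig (of_int c) = of_int c"
proof -
  have "sh [:c:] = [:c:]" unfolding sh_def by simp
  then show ?thesis unfolding sig_def by (simp add: of_int_poly map_poly_pCons sh0)
qed

lemma Lc_smult: "Lc i j (of_int c * P) = c * Lc i j P"
proof -
  have "sig (of_int c * P) = of_int c * sig P" by (simp only: sig_mult sig_of_int)
  then show ?thesis unfolding Lc_def by (simp add: of_int_poly)
qed

lemma Lc_tutte:
  assumes "finite E"
  shows "Lc i j (tutte E I) = int (card {A \<in> Pow E. mrank I E - mrank I A = i \<and> card A - mrank I A = j})"
proof -
  have "Lc i j (tutte E I) = (\<Sum>A\<in>Pow E. Lc i j ((varX - 1) ^ (mrank I E - mrank I A) * (varY - 1) ^ (card A - mrank I A)))"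
    unfolding tutte_def by (rule Lc_sum)
  also have "\<dots> = (\<Sum>A\<in>Pow E. of_bool (mrank I E - mrank I A = i \<and> card A - mrank I A = j))"
    unfolding Lc_def sig_term by (intro sum.cong) auto
  also have "\<dots> = int (card (Pow E \<inter> {A. mrank I E - mrank I A = i \<and> card A - mrank I A = j}))"
    using assms by simp
  also have "Pow E \<inter> {A. mrank I E - mrank I A = i \<and> card A - mrank I A = j} = {A \<in> Pow E. mrank I E - mrank I A = i \<and> card A - mrank I A = j}"
    by blast
  finally show ?thesis .
qed

section \<open>Isomorphism invariance\<close>

lemma miso_mrank:
  assumes f: "bij_betw f E1 E2" and iso: "\<forall>X. X \<subseteq> E1 \<longrightarrow> (X \<in> I1 \<longleftrightarrow> f ` X \<in> I2)"
    and I1: "\<forall>X\<in>I1. X \<subseteq> E1" and I2: "\<forall>X\<in>I2. X \<subseteq> E2" and A: "A \<subseteq> E1"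
  shows "mrank I2 (f ` A) = mrank I1 A"
proof -
  have inj: "inj_on f E1" by (rule bij_betw_imp_inj_on[OF f])
  have "card ` {X. X \<in> I2 \<and> X \<subseteq> f ` A} = card ` {X. X \<in> I1 \<and> X \<subseteq> A}"
  proof
    show "card ` {X. X \<in> I2 \<and> X \<subseteq> f ` A} \<subseteq> card ` {X. X \<in> I1 \<and> X \<subseteq> A}"
    proof
      fix m assume "m \<in> card ` {X. X \<in> I2 \<and> X \<subseteq> f ` A}"
      then obtain Y where Y: "Y \<in> I2" "Y \<subseteq> f ` A" "m = card Y" by blast
      define X where "X = {x \<in> A. f x \<in> Y}"
      have XA: "X \<subseteq> A" unfolding X_def by blast
      have fX: "f ` X = Y" using Y(2) unfolding X_def by blast
      have XE: "X \<subseteq> E1" using XA A by (rule order_trans)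
      have XI: "X \<in> I1" using iso[rule_format, OF XE] fX Y(1) by simp
      have "card (f ` X) = card X" by (rule card_image[OF inj_on_subset[OF inj XE]])
      then have mX: "m = card X" using Y(3) fX by simp
      have "X \<in> {X. X \<in> I1 \<and> X \<subseteq> A}" using XI XA by simp
      then show "m \<in> card ` {X. X \<in> I1 \<and> X \<subseteq> A}" using mX by (rule rev_image_eqI)
    qed
    show "card ` {X. X \<in> I1 \<and> X \<subseteq> A} \<subseteq> card ` {X. X \<in> I2 \<and> X \<subseteq> f ` A}"
    proof
      fix m assume "m \<in> card ` {X. X \<in> I1 \<and> X \<subseteq> A}"
      then obtain X where X: "X \<in> I1" "X \<subseteq> A" "m = card X" by blast
      have XE: "X \<subseteq> E1" using X(2) A by (rule order_trans)
      have fXI: "f ` X \<in> I2" using iso[rule_format, OF XE] X(1) by simp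
      have c: "card (f ` X) = card X" by (rule card_image[OF inj_on_subset[OF inj XE]])
      have "f ` X \<subseteq> f ` A" using X(2) by (rule image_mono)
      then have "f ` X \<in> {X. X \<in> I2 \<and> X \<subseteq> f ` A}" using fXI by simp
      moreover have "m = card (f ` X)" using c X(3) by simp
      ultimately show "m \<in> card ` {X. X \<in> I2 \<and> X \<subseteq> f ` A}" by (rule rev_image_eqI)
    qed
  qed
  then show ?thesis unfolding mrank_def by simp
qed

lemma miso_tutte:
  assumes iso: "miso E1 I1 E2 I2" and I1: "\<forall>X\<in>I1. X \<subseteq> E1" and I2: "\<forall>X\<in>I2. X \<subseteq> E2"
  shows "tutte E1 I1 = tutte E2 I2"
proof -
  obtain f where f: "bij_betw f E1 E2" and iso': "\<forall>X. X \<subseteq> E1 \<longrightarrow> (X \<in> I1 \<longleftrightarrow> f ` X \<in> I2)"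
    using iso unfolding miso_def by blast
  have inj: "inj_on f E1" by (rule bij_betw_imp_inj_on[OF f])
  have fE: "f ` E1 = E2" by (rule bij_betw_imp_surj_on[OF f])
  have r: "mrank I2 (f ` A) = mrank I1 A" if "A \<subseteq> E1" for A using miso_mrank[OF f iso' I1 I2 that] .
  have injP: "inj_on (\<lambda>A. f ` A) (Pow E1)"
  proof (rule inj_onI)
    fix A B assume "A \<in> Pow E1" "B \<in> Pow E1" "f ` A = f ` B"
    then show "A = B" using inj_on_image_eq_iff[OF inj, of A B] by simp
  qed
  have imP: "(\<lambda>A. f ` A) ` Pow E1 = Pow E2"
  proof
    show "(\<lambda>A. f ` A) ` Pow E1 \<subseteq> Pow E2"
    proof
      fix B assume "B \<in> (\<lambda>A. f ` A) ` Pow E1"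
      then obtain A where A: "A \<subseteq> E1" "B = f ` A" by blast
      then have "B \<subseteq> f ` E1" by (simp add: image_mono)
      then show "B \<in> Pow E2" using fE by simp
    qed
    show "Pow E2 \<subseteq> (\<lambda>A. f ` A) ` Pow E1"
    proof
      fix B assume "B \<in> Pow E2"
      then have B: "B \<subseteq> f ` E1" using fE by simp
      have eq: "f ` {x \<in> E1. f x \<in> B} = B"
      proof
        show "f ` {x \<in> E1. f x \<in> B} \<subseteq> B" by blast
        show "B \<subseteq> f ` {x \<in> E1. f x \<in> B}"
        proof
          fix y assume "y \<in> B"
          then obtain x where "x \<in> E1" "y = f x" using B by blast
          then show "y \<in> f ` {x \<in> E1. f x \<in> B}" using \<open>y \<in> B\<close> by blast
        qed
      qed
      have m: "{x \<in> E1. f x \<in> B} \<in> Pow E1" by blast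
      show "B \<in> (\<lambda>A. f ` A) ` Pow E1" using rev_image_eqI[where f="\<lambda>A. f ` A", OF m eq[symmetric]] .
    qed
  qed
  have "tutte E2 I2 = (\<Sum>B\<in>(\<lambda>A. f ` A) ` Pow E1. (varX - 1) ^ (mrank I2 E2 - mrank I2 B) * (varY - 1) ^ (card B - mrank I2 B))"
    unfolding tutte_def imP ..
  also have "\<dots> = (\<Sum>A\<in>Pow E1. (varX - 1) ^ (mrank I2 E2 - mrank I2 (f ` A)) * (varY - 1) ^ (card (f ` A) - mrank I2 (f ` A)))"
    by (simp only: sum.reindex[OF injP] comp_def)
  also have "\<dots> = tutte E1 I1"
    unfolding tutte_def
  proof (rule sum.cong)
    fix A assume "A \<in> Pow E1"
    then have A: "A \<subseteq> E1" by blast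
    have "mrank I2 (f ` E1) = mrank I1 E1" by (rule r) simp
    then have "mrank I2 E2 = mrank I1 E1" unfolding fE .
    moreover have "card (f ` A) = card A" by (rule card_image[OF inj_on_subset[OF inj A]])
    ultimately show "(varX - 1) ^ (mrank I2 E2 - mrank I2 (f ` A)) * (varY - 1) ^ (card (f ` A) - mrank I2 (f ` A)) =
         (varX - 1) ^ (mrank I1 E1 - mrank I1 A) * (varY - 1) ^ (card A - mrank I1 A)"
      using r[OF A] by simp
  qed (rule refl)
  finally show ?thesis by simp
qed


lemma miso_refl: "miso E I E I"
  unfolding miso_def by (intro exI[of _ id]) simp

lemma miso_sym:
  assumes "miso E1 I1 E2 I2" shows "miso E2 I2 E1 I1"
proof -
  obtain f where f: "bij_betw f E1 E2" and iso: "\<forall>X. X \<subseteq> E1 \<longrightarrow> (X \<in> I1 \<longleftrightarrow> f ` X \<in> I2)"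
    using assms unfolding miso_def by blast
  define g where "g = inv_into E1 f"
  have g: "bij_betw g E2 E1" unfolding g_def by (rule bij_betw_inv_into[OF f])
  have "Y \<in> I2 \<longleftrightarrow> g ` Y \<in> I1" if Y: "Y \<subseteq> E2" for Y
  proof -
    have gY: "g ` Y \<subseteq> E1" using Y bij_betw_imp_surj_on[OF g] by blast
    have fgY: "f ` (g ` Y) = Y" unfolding g_def by (rule image_inv_into_cancel[OF bij_betw_imp_surj_on[OF f] Y])
    show ?thesis using iso[rule_format, OF gY] fgY by simp
  qed
  then show ?thesis unfolding miso_def using g by blast
qed

lemma miso_trans:
  assumes "miso E1 I1 E2 I2" "miso E2 I2 E3 I3" shows "miso E1 I1 E3 I3"
proof -
  obtain f where f: "bij_betw f E1 E2" and iso: "\<forall>X. X \<subseteq> E1 \<longrightarrow> (X \<in> I1 \<longleftrightarrow> f ` X \<in> I2)"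
    using assms(1) unfolding miso_def by blast
  obtain g where g: "bij_betw g E2 E3" and iso2: "\<forall>X. X \<subseteq> E2 \<longrightarrow> (X \<in> I2 \<longleftrightarrow> g ` X \<in> I3)"
    using assms(2) unfolding miso_def by blast
  have gf: "bij_betw (g \<circ> f) E1 E3" using bij_betw_trans[OF f g] .
  have "X \<in> I1 \<longleftrightarrow> (g \<circ> f) ` X \<in> I3" if X: "X \<subseteq> E1" for X
  proof -
    have fX: "f ` X \<subseteq> E2" using X bij_betw_imp_surj_on[OF f] by blast
    show ?thesis using iso[rule_format, OF X] iso2[rule_format, OF fX] by (simp add: image_comp)
  qed
  then show ?thesis unfolding miso_def using gf by blast
qed

lemma cusp_sub: "I \<in> cusp_set k n \<Longrightarrow> \<forall>X\<in>I. X \<subseteq> {0..<n}"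
  unfolding cusp_set_def matroid_def by blast

lemma cusp_tutte: "I \<in> cusp_set k n \<Longrightarrow> J \<in> cusp_set k n \<Longrightarrow> miso {0..<n} I {0..<n} J \<Longrightarrow> tutte {0..<n} I = tutte {0..<n} J"
  using miso_tutte cusp_sub by blast

abbreviation Lam where "Lam k n p \<equiv> LamI k (fst p) (snd p) n"

lemma Par_finite: "finite (Par k n)"
proof -
  have "Par k n \<subseteq> {0..n + k} \<times> {0..n + k}" unfolding Par_def by auto
  then show ?thesis by (rule finite_subset) simp
qed

lemma rank_Lam:
  assumes p: "(a', b') \<in> Par k n" and kn: "k \<le> n" and A: "A \<subseteq> {0..<n}"
  shows "mrank (LamI k a' b' n) A = min k (min (card A) (a' + card (A - {0..<b'})))"
proof -
  have ak: "a' \<le> k" using p unfolding Par_def by auto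
  show ?thesis unfolding LamI_gI using gI_rank[OF _ ak A] by simp
qed

lemma rankE_Lam:
  assumes p: "(a', b') \<in> Par k n" and kn: "k \<le> n"
  shows "mrank (LamI k a' b' n) {0..<n} = k"
  using Lam_cusp[OF p kn] unfolding cusp_set_def by blast

lemma N_zero:
  assumes p: "(a', b') \<in> Par k n" and kn: "k \<le> n" and ak: "a < k" and ab: "a < b"
    and c: "a' > a \<or> (a' = a \<and> b' < b) \<or> (a' = 0 \<and> b' = 0)"
  shows "Lc (k - a) (b - a) (tutte {0..<n} (LamI k a' b' n)) = 0"
proof -
  let ?J = "LamI k a' b' n"
  have S: "{A \<in> Pow {0..<n}. mrank ?J {0..<n} - mrank ?J A = k - a \<and> card A - mrank ?J A = b - a} = {}"
  proof (rule ccontr)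
    assume "\<not> ?thesis"
    then obtain A where A: "A \<subseteq> {0..<n}" "mrank ?J {0..<n} - mrank ?J A = k - a" "card A - mrank ?J A = b - a"
      by blast
    have rA: "mrank ?J A = min k (min (card A) (a' + card (A - {0..<b'})))" using rank_Lam[OF p kn A(1)] .
    have rE: "mrank ?J {0..<n} = k" using rankE_Lam[OF p kn] .
    have "mrank ?J A \<le> k" using rA by simp
    then have ra: "mrank ?J A = a" using A(2) rE ak by linarith
    have "mrank ?J A \<le> card A" using rA by simp
    then have cb: "card A = b" using A(3) ra ab by linarith
    have eq: "a = a' + card (A - {0..<b'})" using rA ra cb ak ab by (simp add: min_def split: if_splits)
    show False
      using c
    proof (elim disjE conjE)
      assume "a < a'" then show False using eq by simp
    next
      assume "a' = a" "b' < b"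
      then have "card (A - {0..<b'}) = 0" using eq by simp
      moreover have "finite (A - {0..<b'})" using A(1) finite_subset by blast
      ultimately have "A \<subseteq> {0..<b'}" by simp
      then have "card A \<le> b'" using card_mono[of "{0..<b'}" A] by simp
      then show False using cb \<open>b' < b\<close> by simp
    next
      assume "a' = 0" "b' = 0"
      then have "a = card A" using eq by simp
      then show False using cb ab by simp
    qed
  qed
  show ?thesis unfolding Lc_tutte[OF finite_atLeastLessThan] S by simp
qed

lemma N_pos:
  assumes p: "(a, b) \<in> Par k n" and kn: "k \<le> n" and ab: "a < b"
  shows "Lc (k - a) (b - a) (tutte {0..<n} (LamI k a b n)) \<ge> 1"
proof -
  let ?J = "LamI k a b n"
  have ak: "a < k" and bn: "b \<le> n" using p ab kn unfolding Par_def by auto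
  let ?S = "{A \<in> Pow {0..<n}. mrank ?J {0..<n} - mrank ?J A = k - a \<and> card A - mrank ?J A = b - a}"
  have sub: "{0..<b} \<subseteq> {0..<n}" using bn by auto
  have "mrank ?J {0..<b} = min k (min b (a + card ({0..<b} - {0..<b})))" using rank_Lam[OF p kn sub] by simp
  then have "mrank ?J {0..<b} = a" using ak ab by simp
  then have "{0..<b} \<in> ?S" using sub rankE_Lam[OF p kn] by simp
  then have "?S \<noteq> {}" by blast
  moreover have "finite ?S" by simp
  ultimately have "card ?S > 0" by (simp add: card_gt_0_iff)
  then have "card ?S \<ge> 1" by simp
  then show ?thesis unfolding Lc_tutte[OF finite_atLeastLessThan] by simp
qed

lemma N00_pos:
  assumes kn: "k \<le> n"
  shows "Lc k 0 (tutte {0..<n} (LamI k 0 0 n)) \<ge> 1"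
proof -
  have p: "(0, 0) \<in> Par k n" unfolding Par_def by simp
  let ?J = "LamI k 0 0 n"
  let ?S = "{A \<in> Pow {0..<n}. mrank ?J {0..<n} - mrank ?J A = k \<and> card A - mrank ?J A = 0}"
  have "mrank ?J {} = 0" using rank_Lam[OF p kn, of "{}"] by simp
  then have "{} \<in> ?S" using rankE_Lam[OF p kn] by simp
  then have "?S \<noteq> {}" by blast
  moreover have "finite ?S" by simp
  ultimately have "card ?S > 0" by (simp add: card_gt_0_iff)
  then have "card ?S \<ge> 1" by simp
  then show ?thesis unfolding Lc_tutte[OF finite_atLeastLessThan] by simp
qed

lemma lin_indep:
  assumes kn: "k \<le> n" and Q: "Q \<subseteq> Par k n"
    and sum0: "(\<Sum>p\<in>Q. of_int (c p) * tutte {0..<n} (Lam k n p)) = 0"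
  shows "\<forall>p\<in>Q. c p = 0"
proof -
  have finQ: "finite Q" using Q Par_finite finite_subset by blast
  have L0: "(\<Sum>p\<in>Q. c p * Lc i j (tutte {0..<n} (Lam k n p))) = 0" for i j
  proof -
    have "Lc i j (\<Sum>p\<in>Q. of_int (c p) * tutte {0..<n} (Lam k n p)) = 0" using sum0 Lc_zero by simp
    then show ?thesis by (simp add: Lc_sum Lc_smult)
  qed
  define Q' where "Q' = {p \<in> Q. c p \<noteq> 0 \<and> p \<noteq> (0, 0)}"
  have Q'e: "Q' = {}"
  proof (rule ccontr)
    assume ne: "Q' \<noteq> {}"
    have finQ': "finite Q'" using finQ Q'_def by simp
    define as where "as = Min (fst ` Q')"
    have as_in: "as \<in> fst ` Q'" unfolding as_def using finQ' ne by (intro Min_in) auto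
    define Q'' where "Q'' = {p \<in> Q'. fst p = as}"
    have finQ'': "finite Q''" using finQ' Q''_def by simp
    have neQ'': "Q'' \<noteq> {}" using as_in Q''_def by auto
    define bs where "bs = Max (snd ` Q'')"
    have bs_in: "bs \<in> snd ` Q''" unfolding bs_def using finQ'' neQ'' by (intro Max_in) auto
    then obtain ps where ps: "ps \<in> Q''" "snd ps = bs" by blast
    have ps_eq: "ps = (as, bs)" using ps Q''_def by (metis (mono_tags, lifting) mem_Collect_eq prod.collapse)
    have psQ: "(as, bs) \<in> Q" and cps: "c (as, bs) \<noteq> 0" and ps0: "(as, bs) \<noteq> (0, 0)"
      using ps ps_eq Q''_def Q'_def by auto
    have psP: "(as, bs) \<in> Par k n" using psQ Q by blast
    have ak: "as < k" and ab: "as < bs" using psP ps0 unfolding Par_def by auto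
    have min_a: "as \<le> fst p" if "p \<in> Q'" for p unfolding as_def using finQ' that by (intro Min_le) auto
    have max_b: "snd p \<le> bs" if "p \<in> Q'" "fst p = as" for p
      unfolding bs_def using finQ'' that Q''_def by (intro Max_ge) auto
    have others: "c p * Lc (k - as) (bs - as) (tutte {0..<n} (Lam k n p)) = 0" if "p \<in> Q - {(as, bs)}" for p
    proof (cases "c p = 0")
      case False
      obtain a' b' where pab: "p = (a', b')" by fastforce
      have pP: "(a', b') \<in> Par k n" using that Q pab by blast
      have "a' > as \<or> (a' = as \<and> b' < bs) \<or> (a' = 0 \<and> b' = 0)"
      proof (cases "p = (0, 0)")
        case True then show ?thesis using pab by simp
      next
        case nz: False
        then have "p \<in> Q'" using that False Q'_def by blast
        then have "as \<le> a'" using min_a pab by fastforce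
        moreover have "a' = as \<Longrightarrow> b' \<le> bs" using max_b \<open>p \<in> Q'\<close> pab by fastforce
        moreover have "p \<noteq> (as, bs)" using that by blast
        ultimately show ?thesis using pab by fastforce
      qed
      then have "Lc (k - as) (bs - as) (tutte {0..<n} (LamI k a' b' n)) = 0"
        using N_zero[OF pP kn ak ab] by blast
      then show ?thesis using pab by simp
    qed simp
    have "(\<Sum>p\<in>Q. c p * Lc (k - as) (bs - as) (tutte {0..<n} (Lam k n p)))
        = c (as, bs) * Lc (k - as) (bs - as) (tutte {0..<n} (Lam k n (as, bs)))
          + (\<Sum>p\<in>Q - {(as, bs)}. c p * Lc (k - as) (bs - as) (tutte {0..<n} (Lam k n p)))"
      using sum.remove[OF finQ psQ] by blast
    also have "(\<Sum>p\<in>Q - {(as, bs)}. c p * Lc (k - as) (bs - as) (tutte {0..<n} (Lam k n p))) = 0"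
      using others by (intro sum.neutral) blast
    finally have "c (as, bs) * Lc (k - as) (bs - as) (tutte {0..<n} (LamI k as bs n)) = 0"
      using L0 by simp
    moreover have "Lc (k - as) (bs - as) (tutte {0..<n} (LamI k as bs n)) \<ge> 1" using N_pos[OF psP kn ab] .
    ultimately show False using cps by simp
  qed
  have rest: "c p = 0" if "p \<in> Q" "p \<noteq> (0, 0)" for p using that Q'e Q'_def by blast
  show ?thesis
  proof (cases "(0, 0) \<in> Q")
    case False then show ?thesis using rest by blast
  next
    case True
    have "(\<Sum>p\<in>Q. c p * Lc k 0 (tutte {0..<n} (Lam k n p)))
        = c (0, 0) * Lc k 0 (tutte {0..<n} (Lam k n (0, 0)))
          + (\<Sum>p\<in>Q - {(0, 0)}. c p * Lc k 0 (tutte {0..<n} (Lam k n p)))"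
      using sum.remove[OF finQ True] by blast
    also have "(\<Sum>p\<in>Q - {(0, 0)}. c p * Lc k 0 (tutte {0..<n} (Lam k n p))) = 0"
      using rest by (intro sum.neutral) simp
    finally have "c (0, 0) * Lc k 0 (tutte {0..<n} (LamI k 0 0 n)) = 0" using L0 by simp
    moreover have "Lc k 0 (tutte {0..<n} (LamI k 0 0 n)) \<ge> 1" using N00_pos[OF kn] .
    ultimately have "c (0, 0) = 0" by simp
    then show ?thesis using rest by blast
  qed
qed

lemma tutte_distinct:
  assumes kn: "k \<le> n" and p: "p \<in> Par k n" and q: "q \<in> Par k n" and ne: "p \<noteq> q"
  shows "tutte {0..<n} (Lam k n p) \<noteq> tutte {0..<n} (Lam k n q)"
proof
  assume eq: "tutte {0..<n} (Lam k n p) = tutte {0..<n} (Lam k n q)"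
  define c where "c x = (if x = p then 1 else if x = q then -1 else (0::int))" for x
  have "(\<Sum>x\<in>{p, q}. of_int (c x) * tutte {0..<n} (Lam k n x)) = 0"
    using ne eq unfolding c_def by simp
  then have "\<forall>x\<in>{p, q}. c x = 0" using lin_indep[OF kn, of "{p, q}" c] p q by blast
  then show False unfolding c_def by simp
qed

lemma card_Par: assumes kn: "k \<le> n" shows "card (Par k n) = k * (n - k) + 1"
proof -
  have eq: "Par k n = insert (0, 0) (SIGMA a:{..<k}. {a + 1..a + (n - k)})"
    unfolding Par_def using kn by auto
  have nin: "(0, 0) \<notin> (SIGMA a:{..<k}. {a + 1..a + (n - k)})" by simp
  have "card (SIGMA a:{..<k}. {a + 1..a + (n - k)}) = (\<Sum>a<k. card {a + 1..a + (n - k)})" by simp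
  also have "\<dots> = (\<Sum>a<k. n - k)" by simp
  also have "\<dots> = k * (n - k)" by simp
  finally show ?thesis unfolding eq using nin by simp
qed


theorem proposition4p1:
  fixes k n :: nat
  assumes "k \<le> n"
  shows "card (cusp_set k n // iso_rel k n) = k * (n - k) + 1
    \<and> (\<forall>R. R \<subseteq> cusp_set k n \<and> (\<forall>I\<in>cusp_set k n. \<exists>!J. J \<in> R \<and> miso {0..<n} I {0..<n} J)
          \<longrightarrow> (\<forall>c :: nat set set \<Rightarrow> int.
                (\<Sum>J\<in>R. of_int (c J) * tutte {0..<n} J) = 0 \<longrightarrow> (\<forall>J\<in>R. c J = 0)))"
proof -
  note kn = assms
  let ?E = "{0..<n}"
  let ?C = "cusp_set k n"
  let ?R = "iso_rel k n"
  have LamC: "Lam k n p \<in> ?C" if "p \<in> Par k n" for p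
  proof -
    obtain a b where pab: "p = (a, b)" by fastforce
    show ?thesis using Lam_cusp[of a b k n] that kn pab by simp
  qed
  have eqv: "equiv ?C ?R"
  proof (rule equivI)
    show "?R \<subseteq> ?C \<times> ?C" unfolding iso_rel_def by blast
    show "refl_on ?C ?R" by (rule refl_onI) (simp add: iso_rel_def miso_refl)
    show "sym ?R"
    proof (rule symI)
      fix x y assume "(x, y) \<in> ?R"
      then have h: "x \<in> ?C" "y \<in> ?C" "miso ?E x ?E y" unfolding iso_rel_def by simp_all
      show "(y, x) \<in> ?R" unfolding iso_rel_def using h(1,2) miso_sym[OF h(3)] by simp
    qed
    show "trans ?R"
    proof (rule transI)
      fix x y z assume a1: "(x, y) \<in> ?R" and a2: "(y, z) \<in> ?R"
      have h: "x \<in> ?C" "y \<in> ?C" "miso ?E x ?E y" using a1 unfolding iso_rel_def by simp_all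
      have h2: "z \<in> ?C" "miso ?E y ?E z" using a2 unfolding iso_rel_def by simp_all
      show "(x, z) \<in> ?R" unfolding iso_rel_def using h(1) h2(1) miso_trans[OF h(3) h2(2)] by simp
    qed
  qed
  define cls where "cls p = ?R `` {Lam k n p}" for p
  have bij: "bij_betw cls (Par k n) (?C // ?R)"
    unfolding bij_betw_def
  proof
    show "inj_on cls (Par k n)"
    proof (rule inj_onI)
      fix p q assume p: "p \<in> Par k n" and q: "q \<in> Par k n" and eq: "cls p = cls q"
      have "(Lam k n q, Lam k n q) \<in> ?R" unfolding iso_rel_def using LamC[OF q] miso_refl by simp
      then have "Lam k n q \<in> cls q" unfolding cls_def by simp
      then have "Lam k n q \<in> cls p" using eq by simp
      then have "(Lam k n p, Lam k n q) \<in> ?R" unfolding cls_def by simp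
      then have "miso ?E (Lam k n p) ?E (Lam k n q)" unfolding iso_rel_def by simp
      then have "tutte ?E (Lam k n p) = tutte ?E (Lam k n q)"
        using cusp_tutte LamC[OF p] LamC[OF q] by blast
      then show "p = q" using tutte_distinct[OF kn p q] by blast
    qed
    show "cls ` Par k n = ?C // ?R"
    proof
      show "cls ` Par k n \<subseteq> ?C // ?R"
      proof
        fix X assume "X \<in> cls ` Par k n"
        then obtain p where p: "p \<in> Par k n" "X = cls p" by blast
        show "X \<in> ?C // ?R" unfolding p(2) cls_def by (rule quotientI[OF LamC[OF p(1)]])
      qed
      show "?C // ?R \<subseteq> cls ` Par k n"
      proof
        fix X assume "X \<in> ?C // ?R"
        then obtain I where I: "X = ?R `` {I}" "I \<in> ?C" by (rule quotientE)
        obtain p where p: "p \<in> Par k n" "miso ?E I ?E (Lam k n p)" using classify_Lam[OF I(2)] by blast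
        have "(I, Lam k n p) \<in> ?R" unfolding iso_rel_def using I(2) LamC[OF p(1)] p(2) by simp
        then have "?R `` {I} = ?R `` {Lam k n p}" by (rule equiv_class_eq[OF eqv])
        then have "X = cls p" unfolding cls_def I(1) .
        then show "X \<in> cls ` Par k n" using p(1) by blast
      qed
    qed
  qed
  have part1: "card (?C // ?R) = k * (n - k) + 1"
    using bij_betw_same_card[OF bij] card_Par[OF kn] by simp
  have part2: "\<forall>R. R \<subseteq> ?C \<and> (\<forall>I\<in>?C. \<exists>!J. J \<in> R \<and> miso ?E I ?E J)
          \<longrightarrow> (\<forall>c :: nat set set \<Rightarrow> int.
                (\<Sum>J\<in>R. of_int (c J) * tutte ?E J) = 0 \<longrightarrow> (\<forall>J\<in>R. c J = 0))"
  proof (intro allI impI)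
    fix R and c :: "nat set set \<Rightarrow> int"
    assume H: "R \<subseteq> ?C \<and> (\<forall>I\<in>?C. \<exists>!J. J \<in> R \<and> miso ?E I ?E J)"
      and S0: "(\<Sum>J\<in>R. of_int (c J) * tutte ?E J) = 0"
    have RC: "R \<subseteq> ?C" and uniq: "\<forall>I\<in>?C. \<exists>!J. J \<in> R \<and> miso ?E I ?E J" using H by blast+
    define pi where "pi J = (SOME p. p \<in> Par k n \<and> miso ?E J ?E (Lam k n p))" for J
    have piP: "pi J \<in> Par k n \<and> miso ?E J ?E (Lam k n (pi J))" if "J \<in> R" for J
    proof -
      have "J \<in> ?C" using that RC by blast
      then have "\<exists>p. p \<in> Par k n \<and> miso ?E J ?E (Lam k n p)" using classify_Lam by blast
      then show ?thesis unfolding pi_def by (rule someI_ex)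
    qed
    have inj: "inj_on pi R"
    proof (rule inj_onI)
      fix J J' assume J: "J \<in> R" and J': "J' \<in> R" and eq: "pi J = pi J'"
      have m1: "miso ?E J ?E (Lam k n (pi J))" using piP[OF J] by blast
      have m2: "miso ?E J' ?E (Lam k n (pi J))" using piP[OF J'] eq by simp
      have m: "miso ?E J ?E J'" using miso_trans[OF m1 miso_sym[OF m2]] .
      have JC: "J \<in> ?C" using J RC by blast
      have "\<exists>!J0. J0 \<in> R \<and> miso ?E J ?E J0" using uniq JC by blast
      moreover have "J \<in> R \<and> miso ?E J ?E J" using J miso_refl by blast
      moreover have "J' \<in> R \<and> miso ?E J ?E J'" using J' m by blast
      ultimately show "J = J'" by blast
    qed
    have tJ: "tutte ?E J = tutte ?E (Lam k n (pi J))" if "J \<in> R" for J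
      using cusp_tutte[of J k n "Lam k n (pi J)"] piP[OF that] LamC that RC by blast
    define c' where "c' p = c (inv_into R pi p)" for p
    have "(\<Sum>p\<in>pi ` R. of_int (c' p) * tutte ?E (Lam k n p))
        = (\<Sum>J\<in>R. of_int (c' (pi J)) * tutte ?E (Lam k n (pi J)))"
      by (simp only: sum.reindex[OF inj] comp_def)
    also have "\<dots> = (\<Sum>J\<in>R. of_int (c J) * tutte ?E J)"
    proof (rule sum.cong)
      fix J assume J: "J \<in> R"
      have "c' (pi J) = c J" unfolding c'_def using inv_into_f_f[OF inj J] by simp
      then show "of_int (c' (pi J)) * tutte ?E (Lam k n (pi J)) = of_int (c J) * tutte ?E J"
        using tJ[OF J] by simp
    qed (rule refl)
    also have "\<dots> = 0" by (rule S0)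
    finally have "(\<Sum>p\<in>pi ` R. of_int (c' p) * tutte ?E (Lam k n p)) = 0" .
    moreover have "pi ` R \<subseteq> Par k n" using piP by blast
    ultimately have z: "\<forall>p\<in>pi ` R. c' p = 0" using lin_indep[OF kn, of "pi ` R" c'] by blast
    show "\<forall>J\<in>R. c J = 0"
    proof
      fix J assume J: "J \<in> R"
      have "c' (pi J) = 0" using z J by blast
      then show "c J = 0" unfolding c'_def using inv_into_f_f[OF inj J] by simp
    qed
  qed
  show ?thesis using part1 part2 by blast
qed

end
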